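(* Let $A,B\in\mathcal A_n$. The following are equivalent: (1) $A\le B$ in ASM order; (2) the Laurent polynomial $\mathbf x^A-\mathbf x^B$ is $q$TNN; (3) $\mathbf x^A-\mathbf x^B$ has the $q$SFL property.
   Context: $\mathcal A_n$ is the set of $n\times n$ alternating sign matrices (entries in $\{-1,0,1\}$, partial row and column sums in $\{0,1\}$, full row and column sums $1$). Corner sum matrix $\widetilde A(i,j)=\sum_{p\le i,q\le j}a_{pq}$. ASM order: $A\le B$ iff $\widetilde A(i,j)\ge\widetilde B(i,j)$ for all $i,j\in[n]$. Let $x=(x_{ij})_{i,j=1}^n$ be a matrix of commuting indeterminates; for $A\in\mathcal A_n$, $\mathbf x^A=\prod_{i,j}x_{ij}^{a_{ij}}$. For a real $n\times n$ matrix $M=(m_{ij})$ and real $q>0$, $M_q=(q^{(i-j)^2/2}m_{ij})$; similarly $x_q=(x_{ij,q})$ with $x_{ij,q}=q^{(i-j)^2/2}x_{ij}$, and for a rational function $g$, $g(x_q)$ (resp. $g(M_q)$) means $g$ evaluated at these entries. A real matrix $M$ is locally TNN at $q_0>0$ if all minors (determinants of square submatrices) of $M_{q_0}$ are nonnegative. A rational function $g(x)$ is locally TNN at $q_0$ if $g(M_{q_0})\ge0$ for every real $n\times n$ matrix $M$ that is locally TNN at $q_0$ and for which $g(M_{q_0})$ is defined; $g$ is $q$TNN if it is locally TNN at every $q_0>0$. Let $\Delta_1(x),\dots,\Delta_m(x)$ be all minors of $x$. $g$ has the $q$SFL property if there are polynomials $F,G\in\mathbb R[x]$ with: $g=F/G$;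 $F=\sum c_{i_1\cdots i_k}\Delta_{i_1}(x)\cdots\Delta_{i_k}(x)$ with nonnegative integer coefficients $c$; $G=\prod_j\Delta_j(x)^{d_j}$ with nonnegative integers $d_j$; and $g(x_q)=F(x_q)/G(x_q)$ is a polynomial in $q$ (with coefficients rational functions in the $x_{ij}$). *)

theory Defs
  imports Complex_Main "Jordan_Normal_Form.Determinant"
begin

text \<open>n x n matrices are functions nat => nat => _, indices range over {1..n}.\<close>

definition is_ASM :: "nat \<Rightarrow> (nat \<Rightarrow> nat \<Rightarrow> int) \<Rightarrow> bool" where
  "is_ASM n A \<longleftrightarrow>
     (\<forall>i\<in>{1..n}. \<forall>j\<in>{1..n}. A i j \<in> {-1, 0, 1}) \<and>
     (\<forall>i\<in>{1..n}. \<forall>j\<in>{1..n}. (\<Sum>q=1..j. A i q) \<in> {0, 1}) \<and>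
     (\<forall>i\<in>{1..n}. \<forall>j\<in>{1..n}. (\<Sum>p=1..i. A p j) \<in> {0, 1}) \<and>
     (\<forall>i\<in>{1..n}. (\<Sum>q=1..n. A i q) = 1) \<and>
     (\<forall>j\<in>{1..n}. (\<Sum>p=1..n. A p j) = 1)"

definition corner_sum :: "(nat \<Rightarrow> nat \<Rightarrow> int) \<Rightarrow> nat \<Rightarrow> nat \<Rightarrow> int" where
  "corner_sum A i j = (\<Sum>p=1..i. \<Sum>q=1..j. A p q)"

definition asm_le :: "nat \<Rightarrow> (nat \<Rightarrow> nat \<Rightarrow> int) \<Rightarrow> (nat \<Rightarrow> nat \<Rightarrow> int) \<Rightarrow> bool" where
  "asm_le n A B \<longleftrightarrow> (\<forall>i\<in>{1..n}. \<forall>j\<in>{1..n}. corner_sum A i j \<ge> corner_sum B i j)"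

definition qmat :: "real \<Rightarrow> (nat \<Rightarrow> nat \<Rightarrow> real) \<Rightarrow> (nat \<Rightarrow> nat \<Rightarrow> real)" where
  "qmat q M = (\<lambda>i j. q powr (real_of_int ((int i - int j)^2) / 2) * M i j)"

definition minor_idx :: "nat \<Rightarrow> nat list \<times> nat list \<Rightarrow> bool" where
  "minor_idx n rc \<longleftrightarrow> (case rc of (rs, cs) \<Rightarrow>
     sorted_wrt (<) rs \<and> sorted_wrt (<) cs \<and> length rs = length cs \<and> length rs \<ge> 1 \<and>
     set rs \<subseteq> {1..n} \<and> set cs \<subseteq> {1..n})"

definition minor :: "(nat \<Rightarrow> nat \<Rightarrow> real) \<Rightarrow> nat list \<times> nat list \<Rightarrow> real" where
  "minor M rc = (case rc of (rs, cs) \<Rightarrow>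
     det (mat (length rs) (length rs) (\<lambda>(a, b). M (rs ! a) (cs ! b))))"

definition TNN :: "nat \<Rightarrow> (nat \<Rightarrow> nat \<Rightarrow> real) \<Rightarrow> bool" where
  "TNN n M \<longleftrightarrow> (\<forall>rc. minor_idx n rc \<longrightarrow> minor M rc \<ge> 0)"

definition locally_TNN_mat :: "nat \<Rightarrow> real \<Rightarrow> (nat \<Rightarrow> nat \<Rightarrow> real) \<Rightarrow> bool" where
  "locally_TNN_mat n q0 M \<longleftrightarrow> TNN n (qmat q0 M)"

text \<open>A rational function is given by its evaluation g together with its domain of definition D.\<close>
definition locally_TNN_fun :: "nat \<Rightarrow> real \<Rightarrow> ((nat \<Rightarrow> nat \<Rightarrow> real) \<Rightarrow> bool)
    \<Rightarrow> ((nat \<Rightarrow> nat \<Rightarrow> real) \<Rightarrow> real) \<Rightarrow> bool" where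
  "locally_TNN_fun n q0 D g \<longleftrightarrow>
     (\<forall>M. locally_TNN_mat n q0 M \<and> D (qmat q0 M) \<longrightarrow> g (qmat q0 M) \<ge> 0)"

definition qTNN :: "nat \<Rightarrow> ((nat \<Rightarrow> nat \<Rightarrow> real) \<Rightarrow> bool)
    \<Rightarrow> ((nat \<Rightarrow> nat \<Rightarrow> real) \<Rightarrow> real) \<Rightarrow> bool" where
  "qTNN n D g \<longleftrightarrow> (\<forall>q0>0. locally_TNN_fun n q0 D g)"

definition xmono :: "nat \<Rightarrow> (nat \<Rightarrow> nat \<Rightarrow> int) \<Rightarrow> (nat \<Rightarrow> nat \<Rightarrow> real) \<Rightarrow> real" where
  "xmono n A M = (\<Prod>i\<in>{1..n}. \<Prod>j\<in>{1..n}. M i j powi A i j)"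

definition xmono_dom :: "nat \<Rightarrow> (nat \<Rightarrow> nat \<Rightarrow> int) \<Rightarrow> (nat \<Rightarrow> nat \<Rightarrow> real) \<Rightarrow> bool" where
  "xmono_dom n A M \<longleftrightarrow> (\<forall>i\<in>{1..n}. \<forall>j\<in>{1..n}. A i j < 0 \<longrightarrow> M i j \<noteq> 0)"

definition poly_fun :: "nat \<Rightarrow> ((nat \<Rightarrow> nat \<Rightarrow> real) \<Rightarrow> real) \<Rightarrow> bool" where
  "poly_fun n f \<longleftrightarrow> (\<exists>S c. finite S \<and>
     (\<forall>M. f M = (\<Sum>e\<in>S. c e * (\<Prod>i\<in>{1..n}. \<Prod>j\<in>{1..n}. M i j ^ (e i j :: nat)))))"

text \<open>F = sum of products of minors with nonnegative integer coefficients (list of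
  (coefficient, list of minors)); G = product of powers of minors (list of (minor, exponent)).\<close>
definition eval_F :: "(nat \<times> (nat list \<times> nat list) list) list \<Rightarrow> (nat \<Rightarrow> nat \<Rightarrow> real) \<Rightarrow> real" where
  "eval_F Fs M = (\<Sum>(c, ms) \<leftarrow> Fs. real c * (\<Prod>rc \<leftarrow> ms. minor M rc))"

definition eval_G :: "((nat list \<times> nat list) \<times> nat) list \<Rightarrow> (nat \<Rightarrow> nat \<Rightarrow> real) \<Rightarrow> real" where
  "eval_G Gs M = (\<Prod>(rc, d) \<leftarrow> Gs. minor M rc ^ d)"

definition qSFL :: "nat \<Rightarrow> ((nat \<Rightarrow> nat \<Rightarrow> real) \<Rightarrow> bool)
    \<Rightarrow> ((nat \<Rightarrow> nat \<Rightarrow> real) \<Rightarrow> real) \<Rightarrow> bool" where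
  "qSFL n D g \<longleftrightarrow> (\<exists>Fs Gs.
     (\<forall>(c, ms) \<in> set Fs. \<forall>rc \<in> set ms. minor_idx n rc) \<and>
     (\<forall>(rc, d) \<in> set Gs. minor_idx n rc) \<and>
     \<comment> \<open>g = F / G as rational functions\<close>
     (\<forall>M. D M \<longrightarrow> g M * eval_G Gs M = eval_F Fs M) \<and>
     \<comment> \<open>F(x_q)/G(x_q) is a polynomial in q with coefficients rational functions P_k/Q_k in x\<close>
     (\<exists>N P Q. (\<forall>k\<le>N. poly_fun n (P k) \<and> poly_fun n (Q k) \<and> (\<exists>M. Q k M \<noteq> 0)) \<and>
        (\<forall>q>0. \<forall>M. eval_G Gs (qmat q M) \<noteq> 0 \<and> (\<forall>k\<le>N. Q k M \<noteq> 0) \<longrightarrow>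
           eval_F Fs (qmat q M) / eval_G Gs (qmat q M) = (\<Sum>k\<le>N. P k M / Q k M * q ^ k))))"

end

theory Submission imports Defs begin

definition extm :: "nat \<Rightarrow> (nat \<Rightarrow> nat \<Rightarrow> real) \<Rightarrow> nat \<Rightarrow> nat \<Rightarrow> real" where
  "extm n L i j = (if i \<le> n \<and> j \<le> n then L i j else 0)"

definition mdiff :: "nat \<Rightarrow> (nat \<Rightarrow> nat \<Rightarrow> real) \<Rightarrow> nat \<Rightarrow> nat \<Rightarrow> real" where
  "mdiff n L i j = extm n L i j - extm n L (Suc i) j - extm n L i (Suc j) + extm n L (Suc i) (Suc j)"

definition csr :: "(nat \<Rightarrow> nat \<Rightarrow> real) \<Rightarrow> nat \<Rightarrow> nat \<Rightarrow> real" where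
  "csr X i j = (\<Sum>p=1..i. \<Sum>q=1..j. X p q)"

lemma tele1:
  fixes f :: "nat \<Rightarrow> real"
  assumes "q \<le> Suc n"
  shows "(\<Sum>j=q..n. f j - f (Suc j)) = f q - f (Suc n)" 
proof -
  have "(\<Sum>j=q..n. f (Suc j) - f j) = f (Suc n) - f q" using sum_Suc_diff[OF assms, of f] .
  then show ?thesis by (simp add: sum_subtractf)
qed

lemma tele2:
  assumes "1 \<le> p" "p \<le> n" "1 \<le> q" "q \<le> n"
  shows "(\<Sum>i=p..n. \<Sum>j=q..n. mdiff n L i j) = L p q"
proof -
  have inner: "(\<Sum>j=q..n. mdiff n L i j) = extm n L i q - extm n L (Suc i) q" for i
  proof -
    have "(\<Sum>j=q..n. mdiff n L i j) = (\<Sum>j=q..n. (\<lambda>j. extm n L i j - extm n L (Suc i) j) j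
        - (\<lambda>j. extm n L i j - extm n L (Suc i) j) (Suc j))"
      by (rule sum.cong) (auto simp: mdiff_def)
    also have "\<dots> = extm n L i q - extm n L (Suc i) q - (extm n L i (Suc n) - extm n L (Suc i) (Suc n))"
      by (subst tele1) (use assms in auto)
    finally show ?thesis by (simp add: extm_def)
  qed
  have "(\<Sum>i=p..n. \<Sum>j=q..n. mdiff n L i j) = (\<Sum>i=p..n. extm n L i q - extm n L (Suc i) q)"
    by (simp add: inner)
  also have "\<dots> = extm n L p q - extm n L (Suc n) q" by (rule tele1) (use assms in auto)
  finally show ?thesis using assms by (simp add: extm_def)
qed

lemma sum4_swap:
  "(\<Sum>p\<in>A. \<Sum>q\<in>B. \<Sum>i\<in>C. \<Sum>j\<in>D. F p q i j) = (\<Sum>i\<in>C. \<Sum>j\<in>D. \<Sum>p\<in>A. \<Sum>q\<in>B. F p q i j)"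
proof -
  have "(\<Sum>p\<in>A. \<Sum>q\<in>B. \<Sum>i\<in>C. \<Sum>j\<in>D. F p q i j) = (\<Sum>p\<in>A. \<Sum>i\<in>C. \<Sum>q\<in>B. \<Sum>j\<in>D. F p q i j)"
    by (rule sum.cong[OF refl], rule sum.swap)
  also have "\<dots> = (\<Sum>i\<in>C. \<Sum>p\<in>A. \<Sum>q\<in>B. \<Sum>j\<in>D. F p q i j)" by (rule sum.swap)
  also have "\<dots> = (\<Sum>i\<in>C. \<Sum>p\<in>A. \<Sum>j\<in>D. \<Sum>q\<in>B. F p q i j)"
    by (rule sum.cong[OF refl], rule sum.cong[OF refl], rule sum.swap)
  also have "\<dots> = (\<Sum>i\<in>C. \<Sum>j\<in>D. \<Sum>p\<in>A. \<Sum>q\<in>B. F p q i j)"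
    by (rule sum.cong[OF refl], rule sum.swap)
  finally show ?thesis .
qed

lemma swap4:
  fixes X E :: "nat \<Rightarrow> nat \<Rightarrow> real"
  shows "(\<Sum>p=1..n. \<Sum>q=1..n. X p q * (\<Sum>i=p..n. \<Sum>j=q..n. E i j)) =
         (\<Sum>i=1..n. \<Sum>j=1..n. E i j * csr X i j)"
proof -
  have "(\<Sum>p=1..n. \<Sum>q=1..n. X p q * (\<Sum>i=p..n. \<Sum>j=q..n. E i j)) =
        (\<Sum>p=1..n. \<Sum>q=1..n. \<Sum>i=1..n. \<Sum>j=1..n. (if p \<le> i \<and> q \<le> j then X p q * E i j else 0))"
  proof (intro sum.cong refl)
    fix p q assume p: "p \<in> {1..n}" and q: "q \<in> {1..n}"
    have "X p q * (\<Sum>i=p..n. \<Sum>j=q..n. E i j) = (\<Sum>i=p..n. \<Sum>j=q..n. X p q * E i j)"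
      by (simp add: sum_distrib_left)
    also have "\<dots> = (\<Sum>i=1..n. \<Sum>j=q..n. (if p \<le> i then X p q * E i j else 0))"
      by (rule sum.mono_neutral_cong_left) (use p in auto)
    also have "\<dots> = (\<Sum>i=1..n. \<Sum>j=1..n. (if p \<le> i \<and> q \<le> j then X p q * E i j else 0))"
      by (intro sum.cong refl sum.mono_neutral_cong_left) (use q in auto)
    finally show "X p q * (\<Sum>i=p..n. \<Sum>j=q..n. E i j) = (\<Sum>i=1..n. \<Sum>j=1..n. (if p \<le> i \<and> q \<le> j then X p q * E i j else 0))" .
  qed
  also have "\<dots> = (\<Sum>i=1..n. \<Sum>j=1..n. \<Sum>p=1..n. \<Sum>q=1..n. (if p \<le> i \<and> q \<le> j then X p q * E i j else 0))"
    by (rule sum4_swap)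
  also have "\<dots> = (\<Sum>i=1..n. \<Sum>j=1..n. E i j * csr X i j)"
  proof (intro sum.cong refl)
    fix i j assume i: "i \<in> {1..n}" and j: "j \<in> {1..n}"
    have "(\<Sum>p=1..n. \<Sum>q=1..n. (if p \<le> i \<and> q \<le> j then X p q * E i j else 0))
       = (\<Sum>p=1..i. \<Sum>q=1..n. (if q \<le> j then X p q * E i j else 0))"
      by (rule sum.mono_neutral_cong_right) (use i in auto)
    also have "\<dots> = (\<Sum>p=1..i. \<Sum>q=1..j. X p q * E i j)"
      by (intro sum.cong refl sum.mono_neutral_cong_right) (use j in auto)
    finally show "(\<Sum>p=1..n. \<Sum>q=1..n. (if p \<le> i \<and> q \<le> j then X p q * E i j else 0)) = E i j * csr X i j"
      by (simp add: csr_def sum_distrib_left sum_distrib_right mult.commute)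
  qed
  finally show ?thesis .
qed

lemma sbp:
  fixes X L :: "nat \<Rightarrow> nat \<Rightarrow> real"
  shows "(\<Sum>p=1..n. \<Sum>q=1..n. X p q * L p q) = (\<Sum>i=1..n. \<Sum>j=1..n. mdiff n L i j * csr X i j)"
proof -
  have "(\<Sum>p=1..n. \<Sum>q=1..n. X p q * L p q) = (\<Sum>p=1..n. \<Sum>q=1..n. X p q * (\<Sum>i=p..n. \<Sum>j=q..n. mdiff n L i j))"
    by (intro sum.cong refl) (simp add: tele2)
  also have "\<dots> = (\<Sum>i=1..n. \<Sum>j=1..n. mdiff n L i j * csr X i j)" by (rule swap4)
  finally show ?thesis .
qed


lemma asm_colsum: "is_ASM n A \<Longrightarrow> j \<le> n \<Longrightarrow> corner_sum A n j = int j"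
proof -
  assume A: "is_ASM n A" and j: "j \<le> n"
  have "corner_sum A n j = (\<Sum>q=1..j. \<Sum>p=1..n. A p q)" unfolding corner_sum_def by (rule sum.swap)
  also have "\<dots> = (\<Sum>q=1..j. 1)" by (rule sum.cong) (use A j in \<open>auto simp: is_ASM_def\<close>)
  finally show ?thesis by simp
qed

lemma asm_rowsum: "is_ASM n A \<Longrightarrow> i \<le> n \<Longrightarrow> corner_sum A i n = int i"
proof -
  assume A: "is_ASM n A" and i: "i \<le> n"
  have "corner_sum A i n = (\<Sum>p=1..i. 1)" unfolding corner_sum_def
    by (rule sum.cong) (use A i in \<open>auto simp: is_ASM_def\<close>)
  then show ?thesis by simp
qed

lemma csr_of_int: "csr (\<lambda>p q. real_of_int (A p q - B p q)) i j = real_of_int (corner_sum A i j - corner_sum B i j)"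
  by (simp add: csr_def corner_sum_def of_int_sum sum_subtractf)

lemma sum2_shrink:
  fixes t :: "nat \<Rightarrow> nat \<Rightarrow> real"
  assumes "\<And>i j. i \<in> {1..n} \<Longrightarrow> j \<in> {1..n} \<Longrightarrow> i = n \<or> j = n \<Longrightarrow> t i j = 0"
  shows "(\<Sum>i=1..n. \<Sum>j=1..n. t i j) = (\<Sum>i=1..n-1. \<Sum>j=1..n-1. t i j)"
proof -
  have "(\<Sum>i=1..n. \<Sum>j=1..n. t i j) = (\<Sum>i=1..n-1. \<Sum>j=1..n. t i j)"
  proof (rule sum.mono_neutral_right)
    show "\<forall>i\<in>{1..n} - {1..n - 1}. (\<Sum>j = 1..n. t i j) = 0"
    proof
      fix i assume "i \<in> {1..n} - {1..n - 1}"
      then have "i \<in> {1..n}" "i = n" by auto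
      then show "(\<Sum>j = 1..n. t i j) = 0" by (intro sum.neutral ballI assms) auto
    qed
  qed auto
  also have "\<dots> = (\<Sum>i=1..n-1. \<Sum>j=1..n-1. t i j)"
  proof (rule sum.cong[OF refl])
    fix i assume i: "i \<in> {1..n-1}"
    show "(\<Sum>j=1..n. t i j) = (\<Sum>j=1..n-1. t i j)"
    proof (rule sum.mono_neutral_right)
      show "\<forall>j\<in>{1..n} - {1..n - 1}. t i j = 0"
      proof
        fix j assume "j \<in> {1..n} - {1..n - 1}"
        then have "j \<in> {1..n}" "j = n" by auto
        then show "t i j = 0" using i by (intro assms) auto
      qed
    qed auto
  qed
  finally show ?thesis .
qed

lemma sbp_asm:
  fixes L :: "nat \<Rightarrow> nat \<Rightarrow> real"
  assumes A: "is_ASM n A" and B: "is_ASM n B"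
  shows "(\<Sum>p=1..n. \<Sum>q=1..n. real_of_int (A p q - B p q) * L p q) =
    (\<Sum>i=1..n-1. \<Sum>j=1..n-1. real_of_int (corner_sum A i j - corner_sum B i j) *
        (L i j - L (Suc i) j - L i (Suc j) + L (Suc i) (Suc j)))"
proof -
  have "(\<Sum>p=1..n. \<Sum>q=1..n. real_of_int (A p q - B p q) * L p q) =
     (\<Sum>i=1..n. \<Sum>j=1..n. mdiff n L i j * real_of_int (corner_sum A i j - corner_sum B i j))"
    using sbp[where X="\<lambda>p q. real_of_int (A p q - B p q)" and L=L and n=n] by (simp only: csr_of_int)
  also have "\<dots> = (\<Sum>i=1..n-1. \<Sum>j=1..n-1. mdiff n L i j * real_of_int (corner_sum A i j - corner_sum B i j))"
    by (rule sum2_shrink) (auto simp: asm_colsum[OF A] asm_colsum[OF B] asm_rowsum[OF A] asm_rowsum[OF B])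
  also have "\<dots> = (\<Sum>i=1..n-1. \<Sum>j=1..n-1. real_of_int (corner_sum A i j - corner_sum B i j) *
        (L i j - L (Suc i) j - L i (Suc j) + L (Suc i) (Suc j)))"
    by (intro sum.cong refl) (auto simp: mdiff_def extm_def)
  finally show ?thesis .
qed

lemma powi_exp_ln: "(x::real) > 0 \<Longrightarrow> x powi k = exp (real_of_int k * ln x)"
  by (metis less_irrefl order.strict_implies_order powr_def powr_real_of_int')

lemma xmono_exp:
  assumes "\<And>p q. p \<in> {1..n} \<Longrightarrow> q \<in> {1..n} \<Longrightarrow> N p q > 0"
  shows "xmono n A N = exp (\<Sum>p=1..n. \<Sum>q=1..n. real_of_int (A p q) * ln (N p q))"
  apply (simp add: xmono_def exp_sum)
  apply (intro prod.cong refl)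
  apply (simp add: powi_exp_ln assms)
  done

lemma pos_ineq:
  assumes A: "is_ASM n A" and B: "is_ASM n B" and le: "asm_le n A B"
    and pos: "\<And>p q. p \<in> {1..n} \<Longrightarrow> q \<in> {1..n} \<Longrightarrow> N p q > 0"
    and mi: "\<And>i j. i \<in> {1..n-1} \<Longrightarrow> j \<in> {1..n-1} \<Longrightarrow>
        N i (Suc j) * N (Suc i) j \<le> N i j * N (Suc i) (Suc j)"
  shows "xmono n B N \<le> xmono n A N"
proof -
  let ?L = "\<lambda>p q. ln (N p q)"
  have "0 \<le> (\<Sum>i=1..n-1. \<Sum>j=1..n-1. real_of_int (corner_sum A i j - corner_sum B i j) *
        (?L i j - ?L (Suc i) j - ?L i (Suc j) + ?L (Suc i) (Suc j)))"
  proof (intro sum_nonneg mult_nonneg_nonneg)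
    fix i j assume i: "i \<in> {1..n-1}" and j: "j \<in> {1..n-1}"
    then show "0 \<le> real_of_int (corner_sum A i j - corner_sum B i j)"
      using le unfolding asm_le_def by auto
    have p: "N i j > 0" "N (Suc i) j > 0" "N i (Suc j) > 0" "N (Suc i) (Suc j) > 0"
      using i j by (auto intro!: pos)
    have "ln (N i (Suc j) * N (Suc i) j) \<le> ln (N i j * N (Suc i) (Suc j))"
      using mi[OF i j] p by (simp)
    then show "0 \<le> ?L i j - ?L (Suc i) j - ?L i (Suc j) + ?L (Suc i) (Suc j)"
      using p by (simp add: ln_mult)
  qed
  also have "\<dots> = (\<Sum>p=1..n. \<Sum>q=1..n. real_of_int (A p q - B p q) * ?L p q)"
    by (rule sbp_asm[OF A B, symmetric])
  also have "\<dots> = (\<Sum>p=1..n. \<Sum>q=1..n. real_of_int (A p q) * ?L p q) - (\<Sum>p=1..n. \<Sum>q=1..n. real_of_int (B p q) * ?L p q)"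
    by (simp add: sum_subtractf[symmetric] left_diff_distrib)
  finally have "(\<Sum>p=1..n. \<Sum>q=1..n. real_of_int (B p q) * ?L p q) \<le> (\<Sum>p=1..n. \<Sum>q=1..n. real_of_int (A p q) * ?L p q)"
    by simp
  moreover have "xmono n A N = exp (\<Sum>p=1..n. \<Sum>q=1..n. real_of_int (A p q) * ?L p q)"
    by (rule xmono_exp, rule pos)
  moreover have "xmono n B N = exp (\<Sum>p=1..n. \<Sum>q=1..n. real_of_int (B p q) * ?L p q)"
    by (rule xmono_exp, rule pos)
  ultimately show ?thesis by simp
qed


lemma det2: "det (mat 2 2 f) = f (0,0) * f (1,1) - f (0,1) * (f (1,0) :: real)"
  apply (subst laplace_expansion_row[of _ 2 0])
  apply auto
  apply (simp add: cofactor_def numeral_2_eq_2 det_single mat_delete_def)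
  done

lemma minor1: "minor M ([p],[q]) = M p q"
  unfolding minor_def by (simp add: det_single)

lemma minor2: "minor M ([p1,p2],[q1,q2]) = M p1 q1 * M p2 q2 - M p1 q2 * M p2 q1"
  unfolding minor_def by (simp add: det2[unfolded numeral_2_eq_2])

lemma TNN_entry: "TNN n M \<Longrightarrow> p \<in> {1..n} \<Longrightarrow> q \<in> {1..n} \<Longrightarrow> M p q \<ge> 0"
  unfolding TNN_def
  by (drule spec[of _ "([p],[q])"]) (auto simp: minor_idx_def minor1)

definition M2 :: "nat \<Rightarrow> (nat \<Rightarrow> nat \<Rightarrow> real) \<Rightarrow> bool" where
  "M2 n X \<longleftrightarrow> (\<forall>p1 p2 q1 q2. 1 \<le> p1 \<longrightarrow> p1 < p2 \<longrightarrow> p2 \<le> n \<longrightarrow> 1 \<le> q1 \<longrightarrow> q1 < q2 \<longrightarrow> q2 \<le> n \<longrightarrow>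
      X p1 q2 * X p2 q1 \<le> X p1 q1 * X p2 q2)"

lemma TNN_M2: "TNN n M \<Longrightarrow> M2 n M"
  unfolding M2_def
proof (intro allI impI)
  fix p1 p2 q1 q2 assume T: "TNN n M" and h: "1 \<le> p1" "p1 < p2" "p2 \<le> n" "1 \<le> q1" "q1 < q2" "q2 \<le> n"
  have "minor_idx n ([p1,p2],[q1,q2])" using h by (auto simp: minor_idx_def)
  then have "minor M ([p1,p2],[q1,q2]) \<ge> 0" using T unfolding TNN_def by blast
  then show "M p1 q2 * M p2 q1 \<le> M p1 q1 * M p2 q2" by (simp add: minor2)
qed

definition prodm :: "nat \<Rightarrow> (nat \<Rightarrow> nat \<Rightarrow> real) \<Rightarrow> (nat \<Rightarrow> nat \<Rightarrow> real) \<Rightarrow> nat \<Rightarrow> nat \<Rightarrow> real" where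
  "prodm n X Y p q = (\<Sum>r=1..n. X p r * Y r q)"

lemma M2_prod:
  assumes X: "M2 n X" and Y: "M2 n Y"
  shows "M2 n (prodm n X Y)"
  unfolding M2_def
proof (intro allI impI)
  fix p1 p2 q1 q2 assume h: "1 \<le> p1" "p1 < p2" "p2 \<le> n" "1 \<le> q1" "q1 < q2" "q2 \<le> n"
  define a where "a r s = X p1 r * X p2 s" for r s
  define b where "b r s = Y r q1 * Y s q2 - Y r q2 * Y s q1" for r s
  have e: "prodm n X Y p1 q1 * prodm n X Y p2 q2 - prodm n X Y p1 q2 * prodm n X Y p2 q1
      = (\<Sum>r=1..n. \<Sum>s=1..n. a r s * b r s)"
    unfolding prodm_def a_def b_def sum_product
    by (simp add: sum_subtractf[symmetric] algebra_simps)
  have sw: "(\<Sum>r=1..n. \<Sum>s=1..n. a r s * b r s) = (\<Sum>r=1..n. \<Sum>s=1..n. a s r * b s r)"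
    by (rule sum.swap)
  have "2 * (\<Sum>r=1..n. \<Sum>s=1..n. a r s * b r s) = (\<Sum>r=1..n. \<Sum>s=1..n. (a r s - a s r) * b r s)"
    apply (subst mult_2)
    apply (subst (2) sw)
    apply (simp add: sum.distrib[symmetric] b_def algebra_simps)
    done
  also have "\<dots> \<ge> 0"
  proof (intro sum_nonneg)
    fix r s assume r: "r \<in> {1..n}" and s: "s \<in> {1..n}"
    consider "r < s" | "r = s" | "s < r" by linarith
    then show "0 \<le> (a r s - a s r) * b r s"
    proof cases
      case 1
      have "0 \<le> a r s - a s r" using X h r s 1 unfolding M2_def a_def by force
      moreover have "0 \<le> b r s" using Y h r s 1 unfolding M2_def b_def by force
      ultimately show ?thesis by simp
    next
      case 2 then show ?thesis by (simp add: b_def)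
    next
      case 3
      have "a r s - a s r \<le> 0" using X h r s 3 unfolding M2_def a_def by force
      moreover have "b r s \<le> 0" using Y h r s 3 unfolding M2_def b_def by (force simp: algebra_simps)
      ultimately show ?thesis by (simp add: mult_nonpos_nonpos)
    qed
  qed
  finally show "prodm n X Y p1 q2 * prodm n X Y p2 q1 \<le> prodm n X Y p1 q1 * prodm n X Y p2 q2"
    using e by simp
qed

definition kmat :: "real \<Rightarrow> nat \<Rightarrow> nat \<Rightarrow> real" where
  "kmat e p r = e ^ nat \<bar>int p - int r\<bar>"

lemma abs_monge: "p1 < p2 \<Longrightarrow> q1 < (q2::nat) \<Longrightarrow>
  nat \<bar>int p1 - int q1\<bar> + nat \<bar>int p2 - int q2\<bar> \<le> nat \<bar>int p1 - int q2\<bar> + nat \<bar>int p2 - int q1\<bar>"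
  by arith

lemma M2_kmat: "0 \<le> e \<Longrightarrow> e \<le> 1 \<Longrightarrow> M2 n (kmat e)"
  unfolding M2_def kmat_def
proof (intro allI impI)
  fix p1 p2 q1 q2 :: nat assume e: "0 \<le> e" "e \<le> 1" and h: "1 \<le> p1" "p1 < p2" "p2 \<le> n" "1 \<le> q1" "q1 < q2" "q2 \<le> n"
  have "e ^ (nat \<bar>int p1 - int q2\<bar> + nat \<bar>int p2 - int q1\<bar>) \<le> e ^ (nat \<bar>int p1 - int q1\<bar> + nat \<bar>int p2 - int q2\<bar>)"
    by (rule power_decreasing) (use abs_monge[OF h(2) h(5)] e in auto)
  then show "e ^ nat \<bar>int p1 - int q2\<bar> * e ^ nat \<bar>int p2 - int q1\<bar> \<le> e ^ nat \<bar>int p1 - int q1\<bar> * e ^ nat \<bar>int p2 - int q2\<bar>"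
    by (simp add: power_add)
qed

lemma kmat0: "kmat 0 p r = (if p = r then 1 else 0)"
  unfolding kmat_def by auto

lemma asm_has_one: assumes A: "is_ASM n A" and i: "i \<in> {1..n}" shows "\<exists>q\<in>{1..n}. A i q = 1"
proof (rule ccontr)
  assume "\<not> ?thesis"
  then have "\<forall>q\<in>{1..n}. A i q \<le> 0" using A i unfolding is_ASM_def by fastforce
  then have "(\<Sum>q=1..n. A i q) \<le> 0" by (intro sum_nonpos) auto
  moreover have "(\<Sum>q=1..n. A i q) = 1" using A i unfolding is_ASM_def by auto
  ultimately show False by simp
qed

lemma xmono_nonneg: "(\<And>p q. p \<in> {1..n} \<Longrightarrow> q \<in> {1..n} \<Longrightarrow> N p q \<ge> 0) \<Longrightarrow> xmono n A N \<ge> 0"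
  unfolding xmono_def by (intro prod_nonneg zero_le_power_int) auto

lemma main12:
  assumes A: "is_ASM n A" and B: "is_ASM n B" and le: "asm_le n A B"
    and nn: "\<And>p q. p \<in> {1..n} \<Longrightarrow> q \<in> {1..n} \<Longrightarrow> N p q \<ge> 0"
    and m2: "M2 n N"
    and dA: "\<And>p q. p \<in> {1..n} \<Longrightarrow> q \<in> {1..n} \<Longrightarrow> A p q < 0 \<Longrightarrow> N p q \<noteq> 0"
    and dB: "\<And>p q. p \<in> {1..n} \<Longrightarrow> q \<in> {1..n} \<Longrightarrow> B p q < 0 \<Longrightarrow> N p q \<noteq> 0"
  shows "xmono n B N \<le> xmono n A N"
proof (cases "\<forall>p\<in>{1..n}. \<forall>q\<in>{1..n}. N p q = 0")
  case True
  show ?thesis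
  proof (cases "n = 0")
    case True then show ?thesis by (simp add: xmono_def)
  next
    case False
    then have one: "1 \<in> {1..n}" by auto
    obtain q where q: "q \<in> {1..n}" "B 1 q = 1" using asm_has_one[OF B one] by blast
    have "(\<Prod>j\<in>{1..n}. N 1 j powi B 1 j) = 0"
      apply (subst prod_zero_iff)
       apply simp
      apply (rule bexI[of _ q])
      using q True by auto
    then have "xmono n B N = 0" unfolding xmono_def using one by (subst prod_zero_iff) auto
    then show ?thesis using xmono_nonneg[OF nn] by simp
  qed
next
  case False
  then obtain r0 s0 where r0: "r0 \<in> {1..n}" and s0: "s0 \<in> {1..n}" and ne: "N r0 s0 \<noteq> 0" by blast
  have pos0: "N r0 s0 > 0" using nn[OF r0 s0] ne by simp
  define Ne where "Ne e = prodm n (prodm n (kmat e) N) (kmat e)" for e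
  have ev: "xmono n B (Ne e) \<le> xmono n A (Ne e)" if e: "0 < e" "e < 1" for e
  proof (rule pos_ineq[OF A B le])
    show "Ne e p q > 0" if p: "p \<in> {1..n}" and q: "q \<in> {1..n}" for p q
    proof -
      have k: "kmat e x y > 0" for x y using e by (simp add: kmat_def)
      have inner: "0 \<le> (\<Sum>r=1..n. kmat e p r * N r s)" if "s \<in> {1..n}" for s
        using nn k that by (intro sum_nonneg mult_nonneg_nonneg) (auto intro: less_imp_le)
      have "0 < kmat e p r0 * N r0 s0" using k pos0 by simp
      also have "\<dots> \<le> (\<Sum>r=1..n. kmat e p r * N r s0)"
        using r0 s0 nn k by (intro member_le_sum mult_nonneg_nonneg) (auto intro: less_imp_le)
      finally have "0 < (\<Sum>r=1..n. kmat e p r * N r s0) * kmat e s0 q" using k by simp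
      also have "\<dots> \<le> Ne e p q"
        unfolding Ne_def prodm_def
        using s0 inner k by (intro member_le_sum mult_nonneg_nonneg) (auto intro: less_imp_le)
      finally show ?thesis .
    qed
  next
    have "M2 n (Ne e)" unfolding Ne_def using e
      by (intro M2_prod M2_kmat m2) auto
    then show "Ne e i (Suc j) * Ne e (Suc i) j \<le> Ne e i j * Ne e (Suc i) (Suc j)"
      if "i \<in> {1..n-1}" "j \<in> {1..n-1}" for i j
      using that unfolding M2_def by auto
  qed
  have lim_e: "((\<lambda>e. Ne e p q) \<longlongrightarrow> N p q) (at_right 0)" if p: "p \<in> {1..n}" and q: "q \<in> {1..n}" for p q
  proof -
    have "((\<lambda>e. Ne e p q) \<longlongrightarrow> Ne 0 p q) (at_right 0)"
      unfolding Ne_def prodm_def kmat_def by (intro tendsto_intros)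
    moreover have "Ne 0 p q = N p q"
    proof -
      have k1: "(\<Sum>r=1..n. kmat 0 p r * N r s) = N p s" for s
      proof -
        have "(\<Sum>r=1..n. kmat 0 p r * N r s) = (\<Sum>r=1..n. if r = p then N p s else 0)"
          by (intro sum.cong) (auto simp: kmat0)
        also have "\<dots> = N p s" using p by simp
        finally show ?thesis .
      qed
      have "Ne 0 p q = (\<Sum>s=1..n. N p s * kmat 0 s q)"
        unfolding Ne_def prodm_def k1 by simp
      also have "\<dots> = (\<Sum>s=1..n. if s = q then N p q else 0)"
        by (intro sum.cong) (auto simp: kmat0)
      also have "\<dots> = N p q" using q by simp
      finally show ?thesis .
    qed
    ultimately show ?thesis by simp
  qed
  have lim_x: "((\<lambda>e. xmono n C (Ne e)) \<longlongrightarrow> xmono n C N) (at_right 0)"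
    if dC: "\<And>p q. p \<in> {1..n} \<Longrightarrow> q \<in> {1..n} \<Longrightarrow> C p q < 0 \<Longrightarrow> N p q \<noteq> 0" for C
    unfolding xmono_def
    by (intro tendsto_prod tendsto_power_int' lim_e) (use dC in force)+
  have "eventually (\<lambda>e. xmono n B (Ne e) \<le> xmono n A (Ne e)) (at_right 0)"
    by (rule eventually_at_rightI[of 0 1]) (use ev in auto)
  then show ?thesis
    using tendsto_le[OF trivial_limit_at_right_real lim_x[OF dA] lim_x[OF dB]] by blast
qed

lemma det_scale:
  fixes f :: "nat \<times> nat \<Rightarrow> real"
  shows "det (mat m m (\<lambda>(i,j). a i * b j * f (i,j))) = (\<Prod>i<m. a i) * (\<Prod>j<m. b j) * det (mat m m f)"
proof -
  have perm: "(\<Prod>i = 0..<m. mat m m (\<lambda>(i,j). a i * b j * f (i,j)) $$ (i, p i)) =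
     (\<Prod>i<m. a i) * (\<Prod>j<m. b j) * (\<Prod>i = 0..<m. mat m m f $$ (i, p i))"
    if p: "p permutes {0..<m}" for p
  proof -
    have pi: "i < m \<Longrightarrow> p i < m" for i using permutes_in_image[OF p] by auto
    have "(\<Prod>i = 0..<m. mat m m (\<lambda>(i,j). a i * b j * f (i,j)) $$ (i, p i)) =
      (\<Prod>i = 0..<m. a i * b (p i) * f (i, p i))"
      by (intro prod.cong refl) (simp add: pi)
    also have "\<dots> = (\<Prod>i = 0..<m. a i) * (\<Prod>i = 0..<m. b (p i)) * (\<Prod>i = 0..<m. f (i, p i))"
      by (simp add: prod.distrib)
    also have "(\<Prod>i = 0..<m. b (p i)) = (\<Prod>i = 0..<m. b i)"
      using prod.permute[OF p, of b] by (simp add: comp_def)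
    also have "(\<Prod>i = 0..<m. f (i, p i)) = (\<Prod>i = 0..<m. mat m m f $$ (i, p i))"
      by (intro prod.cong refl) (simp add: pi)
    finally show ?thesis by (simp add: atLeast0LessThan)
  qed
  have "det (mat m m (\<lambda>(i,j). a i * b j * f (i,j))) = (\<Sum> p \<in> {p. p permutes {0 ..< m}}.
     signof p * (\<Prod>i = 0..<m. mat m m (\<lambda>(i,j). a i * b j * f (i,j)) $$ (i, p i)))"
    by (rule det_def') simp
  also have "\<dots> = (\<Sum> p \<in> {p. p permutes {0 ..< m}}.
     signof p * ((\<Prod>i<m. a i) * (\<Prod>j<m. b j) * (\<Prod>i = 0..<m. mat m m f $$ (i, p i))))"
    by (intro sum.cong refl) (simp only: perm mem_Collect_eq)
  also have "\<dots> = (\<Prod>i<m. a i) * (\<Prod>j<m. b j) * (\<Sum> p \<in> {p. p permutes {0 ..< m}}.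
     signof p * (\<Prod>i = 0..<m. mat m m f $$ (i, p i)))"
    by (simp add: sum_distrib_left algebra_simps)
  also have "(\<Sum> p \<in> {p. p permutes {0 ..< m}}. signof p * (\<Prod>i = 0..<m. mat m m f $$ (i, p i))) = det (mat m m f)"
    by (rule det_def'[symmetric]) simp
  finally show ?thesis .
qed


lemma diag_ones: "dim_row A = k \<Longrightarrow> (\<And>i. i < k \<Longrightarrow> A $$ (i,i) = 1) \<Longrightarrow> diag_mat A = replicate k 1"
  by (intro nth_equalityI) (auto simp: diag_mat_def)

lemma cauchy_id: fixes X Y x0 y0 :: real shows "X>0 \<Longrightarrow> Y>0 \<Longrightarrow> x0>0 \<Longrightarrow> y0>0 \<Longrightarrow>
  1/(X+Y) - (x0+y0)/(X+y0) * (1/(x0+Y)) = (X-x0)/(X+y0) * ((Y-y0)/(x0+Y)) * (1/(X+Y))"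
  by (simp add: divide_simps) (simp add: algebra_simps)

lemma cauchy_id0: fixes X x0 y0 :: real shows "X>0 \<Longrightarrow> x0>0 \<Longrightarrow> y0>0 \<Longrightarrow>
  1/(X+y0) - (x0+y0)/(X+y0) * (1/(x0+y0)) = 0"
  by (simp add: divide_simps)

lemma cauchy_pos:
  fixes x y :: "nat \<Rightarrow> real"
  assumes "\<And>i j. i < j \<Longrightarrow> j < k \<Longrightarrow> x i < x j"
    and "\<And>i j. i < j \<Longrightarrow> j < k \<Longrightarrow> y i < y j"
    and "\<And>i. i < k \<Longrightarrow> x i > 0"
    and "\<And>i. i < k \<Longrightarrow> y i > 0"
  shows "det (mat k k (\<lambda>(a,b). 1 / (x a + y b))) > 0"
  using assms
proof (induction k arbitrary: x y)
  case 0
  then show ?case by simp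
next
  case (Suc m)
  note xi = Suc.prems(1) and yi = Suc.prems(2) and xp = Suc.prems(3) and yp = Suc.prems(4)
  define C where "C = mat (Suc m) (Suc m) (\<lambda>(a,b). 1 / (x a + y b))"
  define c where "c i = (x 0 + y 0) / (x i + y 0)" for i
  define E where "E = mat (Suc m) (Suc m) (\<lambda>(i,j). if i = j then 1 else if j = 0 then - c i else (0::real))"
  define al where "al i = (x (Suc i) - x 0) / (x (Suc i) + y 0)" for i
  define be where "be j = (y (Suc j) - y 0) / (x 0 + y (Suc j))" for j
  define C' where "C' = mat m m (\<lambda>(a,b). 1 / (x (Suc a) + y (Suc b)))"
  define S where "S = mat m m (\<lambda>(i,j). al i * be j * (1 / (x (Suc i) + y (Suc j))))"
  define F where "F = four_block_mat (mat 1 1 (\<lambda>_. 1 / (x 0 + y 0))) (mat 1 m (\<lambda>(_,j). 1 / (x 0 + y (Suc j))))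
     (0\<^sub>m m 1) S"
  have x0: "x 0 > 0" and y0: "y 0 > 0" using xp yp by auto
  have detE: "det E = 1"
  proof -
    have "det E = prod_list (diag_mat E)"
      by (rule det_lower_triangular[of "Suc m"]) (simp_all add: E_def)
    also have "diag_mat E = replicate (Suc m) 1"
      by (rule diag_ones) (simp_all add: E_def)
    finally show ?thesis by simp
  qed
  have ECe: "(E * C) $$ (i,j) = (if i = 0 then 1 / (x 0 + y j) else 1 / (x i + y j) - c i * (1 / (x 0 + y j)))"
    if i: "i < Suc m" and j: "j < Suc m" for i j
  proof -
    have "(E * C) $$ (i,j) = (\<Sum>l = 0..<Suc m. E $$ (i,l) * C $$ (l,j))"
      using i j by (simp add: E_def C_def scalar_prod_def)
    also have "\<dots> = (\<Sum>l = 0..<Suc m. (if l = i then 1 / (x i + y j) else 0) +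
        (if l = 0 \<and> i \<noteq> 0 then - c i * (1 / (x 0 + y j)) else 0))"
      by (intro sum.cong refl) (use i j in \<open>auto simp: E_def C_def\<close>)
    also have "\<dots> = (if i = 0 then 1 / (x 0 + y j) else 1 / (x i + y j) - c i * (1 / (x 0 + y j)))"
      using i by (simp add: sum.distrib)
    finally show ?thesis .
  qed
  have EC: "E * C = F"
  proof (rule eq_matI)
    show "dim_row (E * C) = dim_row F" "dim_col (E * C) = dim_col F" by (auto simp: E_def C_def F_def S_def)
    fix i j assume i: "i < dim_row F" and j: "j < dim_col F"
    then have i': "i < Suc m" and j': "j < Suc m" by (auto simp: F_def S_def)
    show "(E * C) $$ (i,j) = F $$ (i,j)"
    proof (cases "i = 0")
      case True then show ?thesis using i' j' by (auto simp: ECe F_def S_def)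
    next
      case False
      then obtain i1 where i1: "i = Suc i1" by (cases i) auto
      have xi0: "x 0 < x i" using xi[of 0 i] i' False by auto
      have xip: "x i > 0" using xp i' by auto
      show ?thesis
      proof (cases "j = 0")
        case True
        have z: "1 / (x i + y 0) - c i * (1 / (x 0 + y 0)) = 0"
          unfolding c_def using cauchy_id0[OF xip x0 y0] .
        then show ?thesis using i' j' False True by (simp add: ECe F_def S_def)
      next
        case False
        then obtain j1 where j1: "j = Suc j1" by (cases j) auto
        have yjp: "y j > 0" using yp j' by auto
        have "1 / (x i + y j) - c i * (1 / (x 0 + y j)) = al i1 * be j1 * (1 / (x i + y j))"
          unfolding al_def be_def c_def i1[symmetric] j1[symmetric]
          using cauchy_id[OF xip yjp x0 y0] by simp
        then show ?thesis using i' j' False \<open>i \<noteq> 0\<close> i1 j1 by (auto simp: ECe F_def S_def)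
      qed
    qed
  qed
  have "det (E * C) = det E * det C"
    by (rule det_mult[of _ "Suc m"]) (simp_all add: E_def C_def)
  then have "det C = det (E * C)" by (simp add: detE)
  also have "\<dots> = det (mat 1 1 (\<lambda>_. 1 / (x 0 + y 0))) * det S"
    unfolding EC F_def
    by (rule det_four_block_mat_lower_left_zero_col) (auto simp: S_def)
  also have "\<dots> = 1 / (x 0 + y 0) * ((\<Prod>i<m. al i) * (\<Prod>j<m. be j) * det C')"
  proof -
    have "det S = (\<Prod>i<m. al i) * (\<Prod>j<m. be j) * det C'"
      unfolding S_def C'_def using det_scale[of m al be "\<lambda>(i,j). 1 / (x (Suc i) + y (Suc j))"] by simp
    then show ?thesis by (simp add: det_single)
  qed
  finally have dC: "det C = 1 / (x 0 + y 0) * ((\<Prod>i<m. al i) * (\<Prod>j<m. be j) * det C')" .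
  have "det C' > 0" unfolding C'_def
    by (rule Suc.IH) (use xi yi xp yp in auto)
  moreover have "(\<Prod>i<m. al i) > 0"
    unfolding al_def using xi[of 0] xp y0 by (intro prod_pos) (auto intro!: divide_pos_pos add_pos_pos)
  moreover have "(\<Prod>j<m. be j) > 0"
    unfolding be_def using yi[of 0] yp x0 by (intro prod_pos) (auto intro!: divide_pos_pos add_pos_pos)
  ultimately have "det C > 0" using dC x0 y0 by simp
  then show ?case by (simp add: C_def)
qed

lemma prod_powi:
  assumes "(t::real) \<noteq> 0" "finite S" shows "(\<Prod>i\<in>S. t powi f i) = t powi (\<Sum>i\<in>S. f i)"
  using assms(2) by (induction S rule: finite_induct) (auto simp: power_int_add assms(1))

lemma blk_sum:
  assumes "i0 \<le> n" "j0 \<le> n"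
  shows "(\<Sum>p=1..n. \<Sum>q=1..n. if p \<le> i0 \<and> q \<le> j0 then C p q else (0::int)) = corner_sum C i0 j0"
proof -
  have "(\<Sum>p=1..n. \<Sum>q=1..n. if p \<le> i0 \<and> q \<le> j0 then C p q else (0::int)) =
        (\<Sum>p=1..i0. \<Sum>q=1..n. if q \<le> j0 then C p q else 0)"
    by (rule sum.mono_neutral_cong_right) (use assms in auto)
  also have "\<dots> = (\<Sum>p=1..i0. \<Sum>q=1..j0. C p q)"
    by (intro sum.cong refl sum.mono_neutral_cong_right) (use assms in auto)
  finally show ?thesis unfolding corner_sum_def .
qed

lemma xmono_mult: "xmono n C (\<lambda>p q. u p q * h p q) = xmono n C u * xmono n C h"
  unfolding xmono_def by (simp add: power_int_mult_distrib prod.distrib)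

lemma xmono_blk:
  assumes t: "(t::real) \<noteq> 0" and "i0 \<le> n" "j0 \<le> n"
  shows "xmono n C (\<lambda>p q. if p \<le> i0 \<and> q \<le> j0 then t else 1) = t powi corner_sum C i0 j0"
proof -
  have "xmono n C (\<lambda>p q. if p \<le> i0 \<and> q \<le> j0 then t else 1) =
     (\<Prod>p=1..n. \<Prod>q=1..n. t powi (if p \<le> i0 \<and> q \<le> j0 then C p q else 0))"
    unfolding xmono_def by (intro prod.cong refl) auto
  also have "\<dots> = (\<Prod>p=1..n. t powi (\<Sum>q=1..n. if p \<le> i0 \<and> q \<le> j0 then C p q else 0))"
    by (intro prod.cong refl prod_powi t) auto
  also have "\<dots> = t powi (\<Sum>p=1..n. \<Sum>q=1..n. if p \<le> i0 \<and> q \<le> j0 then C p q else 0)"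
    by (intro prod_powi t) auto
  finally show ?thesis using blk_sum[OF assms(2,3)] by simp
qed

lemma witness:
  assumes i0: "i0 \<in> {1..n}" and j0: "j0 \<in> {1..n}" and lt: "corner_sum A i0 j0 < corner_sum B i0 j0"
  shows "\<exists>N. (\<forall>p\<in>{1..n}. \<forall>q\<in>{1..n}. N p q > 0) \<and> (\<forall>rc. minor_idx n rc \<longrightarrow> minor N rc > 0)
     \<and> xmono n A N < xmono n B N"
proof -
  define xs where "xs d p = (if p \<le> i0 then d * real p else 1 + real p)" for d :: real and p
  define ys where "ys d q = (if q \<le> j0 then d * real q else 1 + real q)" for d :: real and q
  define N where "N d p q = 1 / (xs d p + ys d q)" for d p q
  define h where "h d p q = (if p \<le> i0 \<and> q \<le> j0 then 1 / (real p + real q) else 1 / (xs d p + ys d q))" for d p q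
  define cA where "cA = corner_sum A i0 j0"
  define cB where "cB = corner_sum B i0 j0"
  define k where "k = nat (cB - cA)"
  have k: "k \<ge> 1" "cA = cB - int k" using lt by (auto simp: k_def cA_def cB_def)
  have xs_mono: "xs d p < xs d p'" if d: "0 < d" "d < 1" and p: "1 \<le> p" "p < p'" for d p p'
  proof -
    have dp: "d * real p \<le> real p" using d by (intro mult_left_le_one_le) auto
    show ?thesis
    proof (cases "p' \<le> i0")
      case True
      then show ?thesis using d p by (simp add: xs_def)
    next
      case False
      have "xs d p \<le> 1 + real p" using dp by (simp add: xs_def)
      moreover have "real p < real p'" using p by simp
      ultimately show ?thesis using False by (simp add: xs_def)
    qed
  qed
  have ys_mono: "ys d q < ys d q'" if d: "0 < d" "d < 1" and q: "1 \<le> q" "q < q'" for d q q'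
  proof -
    have dp: "d * real q \<le> real q" using d by (intro mult_left_le_one_le) auto
    show ?thesis
    proof (cases "q' \<le> j0")
      case True
      then show ?thesis using d q by (simp add: ys_def)
    next
      case False
      have "ys d q \<le> 1 + real q" using dp by (simp add: ys_def)
      moreover have "real q < real q'" using q by simp
      ultimately show ?thesis using False by (simp add: ys_def)
    qed
  qed
  have xs_pos: "xs d p > 0" if "0 < d" "1 \<le> p" for d p using that by (auto simp: xs_def)
  have ys_pos: "ys d q > 0" if "0 < d" "1 \<le> q" for d q using that by (auto simp: ys_def)
  have Npos: "N d p q > 0" if "0 < d" "1 \<le> p" "1 \<le> q" for d p q
    using xs_pos[OF that(1,2)] ys_pos[OF that(1,3)] by (simp add: N_def)
  have minors: "minor (N d) rc > 0" if d: "0 < d" "d < 1" and rc: "minor_idx n rc" for d rc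
  proof -
    obtain rs cs where rc_eq: "rc = (rs, cs)" by (cases rc)
    have s: "sorted_wrt (<) rs" "sorted_wrt (<) cs" "length cs = length rs" "set rs \<subseteq> {1..n}" "set cs \<subseteq> {1..n}"
      using rc by (auto simp: rc_eq minor_idx_def)
    have r1: "1 \<le> rs ! a" if "a < length rs" for a using s(4) nth_mem[OF that] by auto
    have c1: "1 \<le> cs ! a" if "a < length rs" for a
    proof -
      have "cs ! a \<in> set cs" using s(3) that by simp
      then show ?thesis using s(5) by auto
    qed
    have "det (mat (length rs) (length rs) (\<lambda>(a,b). 1 / (xs d (rs ! a) + ys d (cs ! b)))) > 0"
    proof (rule cauchy_pos)
      show "xs d (rs ! a) < xs d (rs ! b)" if "a < b" "b < length rs" for a b
        using xs_mono[OF d r1 sorted_wrt_nth_less[OF s(1) that]] that by simp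
      show "ys d (cs ! a) < ys d (cs ! b)" if "a < b" "b < length rs" for a b
        using ys_mono[OF d c1 sorted_wrt_nth_less[OF s(2)]] that s(3) by simp
      show "xs d (rs ! a) > 0" if "a < length rs" for a using xs_pos[OF d(1) r1[OF that]] .
      show "ys d (cs ! a) > 0" if "a < length rs" for a using ys_pos[OF d(1) c1[OF that]] .
    qed
    then show ?thesis by (simp add: rc_eq minor_def N_def)
  qed
  have Nsplit: "N d = (\<lambda>p q. (if p \<le> i0 \<and> q \<le> j0 then 1 / d else 1) * h d p q)" if "0 < d" for d
    using that by (intro ext) (auto simp: N_def h_def xs_def ys_def field_simps)
  have xN: "xmono n C (N d) = (1 / d) powi corner_sum C i0 j0 * xmono n C (h d)" if "0 < d" for d C
    using that i0 j0 by (simp add: Nsplit xmono_mult xmono_blk)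
  have h0pos: "h 0 p q > 0" if "1 \<le> p" "1 \<le> q" for p q
    using that by (auto simp: h_def xs_def ys_def)
  have limh: "((\<lambda>d. h d p q) \<longlongrightarrow> h 0 p q) (at_right 0)" if "1 \<le> p" "1 \<le> q" for p q
  proof (cases "p \<le> i0 \<and> q \<le> j0")
    case True then show ?thesis by (simp add: h_def)
  next
    case False
    have "((\<lambda>d. 1 / (xs d p + ys d q)) \<longlongrightarrow> 1 / (xs 0 p + ys 0 q)) (at_right 0)"
    proof (intro tendsto_intros)
      show "((\<lambda>d. xs d p) \<longlongrightarrow> xs 0 p) (at_right 0)" by (cases "p \<le> i0") (auto simp: xs_def intro!: tendsto_eq_intros)
      show "((\<lambda>d. ys d q) \<longlongrightarrow> ys 0 q) (at_right 0)" by (cases "q \<le> j0") (auto simp: ys_def intro!: tendsto_eq_intros)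
      show "xs 0 p + ys 0 q \<noteq> 0" using False that by (auto simp: xs_def ys_def)
    qed
    moreover have "(\<lambda>d. h d p q) = (\<lambda>d. 1 / (xs d p + ys d q))" using False unfolding h_def by (intro ext) auto
    moreover have "h 0 p q = 1 / (xs 0 p + ys 0 q)" using False unfolding h_def by auto
    ultimately show ?thesis by simp
  qed
  have limx: "((\<lambda>d. xmono n C (h d)) \<longlongrightarrow> xmono n C (h 0)) (at_right 0)" for C
    unfolding xmono_def
  proof (intro tendsto_prod tendsto_power_int limh)
    fix i j assume "i \<in> {1..n}" "j \<in> {1..n}"
    then show "h 0 i j \<noteq> 0" using h0pos[of i j] by auto
  qed auto
  have PB: "xmono n B (h 0) > 0" unfolding xmono_def
    by (intro prod_pos zero_less_power_int h0pos) auto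
  have "((\<lambda>d. d ^ k * xmono n A (h d) - xmono n B (h d)) \<longlongrightarrow> 0 ^ k * xmono n A (h 0) - xmono n B (h 0)) (at_right 0)"
    by (intro tendsto_intros limx)
  moreover have z: "(0::real) ^ k = 0" using k(1) by simp
  have "0 ^ k * xmono n A (h 0) - xmono n B (h 0) < 0" by (simp add: z PB)
  ultimately have ev1: "eventually (\<lambda>d. d ^ k * xmono n A (h d) - xmono n B (h d) < 0) (at_right 0)"
    by (rule order_tendstoD(2))
  have ev2: "eventually (\<lambda>d. d \<in> {0<..<1}) (at_right (0::real))"
    by (rule eventually_at_right_real) simp
  obtain d where d: "d ^ k * xmono n A (h d) - xmono n B (h d) < 0" "0 < d" "d < 1"
    using eventually_happens'[OF trivial_limit_at_right_real eventually_conj[OF ev1 ev2]] by auto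
  have "(1 / d) powi cA = (1 / d) powi cB * d ^ k"
    using d(2) by (simp add: k(2) power_int_diff power_int_inverse[symmetric] power_int_of_nat field_simps)
  then have "xmono n A (N d) - xmono n B (N d) = (1 / d) powi cB * (d ^ k * xmono n A (h d) - xmono n B (h d))"
    using d(2) by (simp add: xN cA_def cB_def algebra_simps)
  also have "\<dots> < 0" using d by (intro mult_pos_neg zero_less_power_int) auto
  finally have "xmono n A (N d) < xmono n B (N d)" by simp
  moreover have "\<forall>p\<in>{1..n}. \<forall>q\<in>{1..n}. N d p q > 0" using Npos d by auto
  moreover have "\<forall>rc. minor_idx n rc \<longrightarrow> minor (N d) rc > 0" using minors d by auto
  ultimately show ?thesis by blast
qed

lemma prod_list_concat_gen: "prod_list (concat xss) = prod_list (map prod_list (xss :: real list list))"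
  by (induction xss) auto

lemma prod_list_upt: "prod_list (map f [a..<b]) = (\<Prod>i\<in>{a..<b}. (f i :: real))"
  by (induction b) (auto simp: atLeastLessThanSuc mult.commute)

lemma eval_F_append: "eval_F (xs @ ys) M = eval_F xs M + eval_F ys M"
  by (simp add: eval_F_def)

lemma eval_F_prefix:
  "eval_F (map (\<lambda>(c, ms). (c, pre @ ms)) Fs) M = (\<Prod>rc \<leftarrow> pre. minor M rc) * eval_F Fs M"
  by (induction Fs) (auto simp: eval_F_def algebra_simps)

definition ma :: "nat \<Rightarrow> nat \<Rightarrow> (nat list \<times> nat list) list" where
  "ma i j = [([i],[Suc j]), ([Suc i],[j])]"

definition mD :: "nat \<Rightarrow> nat \<Rightarrow> nat list \<times> nat list" where
  "mD i j = ([i, Suc i], [j, Suc j])"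

fun expd :: "(nat \<times> nat) list \<Rightarrow> (nat \<times> (nat list \<times> nat list) list) list" where
  "expd [] = [(1, [])]"
| "expd ((i,j) # fs) = map (\<lambda>(c,ms). (c, ma i j @ ms)) (expd fs) @ map (\<lambda>(c,ms). (c, [mD i j] @ ms)) (expd fs)"

fun expd' :: "(nat \<times> nat) list \<Rightarrow> (nat \<times> (nat list \<times> nat list) list) list" where
  "expd' [] = []"
| "expd' ((i,j) # fs) = map (\<lambda>(c,ms). (c, [mD i j] @ ms)) (expd fs) @ map (\<lambda>(c,ms). (c, ma i j @ ms)) (expd' fs)"

lemma minor_ma: "(\<Prod>rc \<leftarrow> ma i j. minor M rc) = M i (Suc j) * M (Suc i) j"
  by (simp add: ma_def minor1)

lemma minor_mD: "minor M (mD i j) = M i j * M (Suc i) (Suc j) - M i (Suc j) * M (Suc i) j"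
  by (simp add: mD_def minor2)

lemma eval_expd: "eval_F (expd fs) M = (\<Prod>(i,j) \<leftarrow> fs. M i j * M (Suc i) (Suc j))"
proof (induction fs rule: expd.induct)
  case 1 then show ?case by (simp add: eval_F_def)
next
  case (2 i j fs)
  show ?case
    using 2 by (simp add: eval_F_append eval_F_prefix[where pre = "ma i j", simplified]
        eval_F_prefix[where pre = "[mD i j]", simplified] minor_ma minor_mD algebra_simps)
qed

lemma eval_expd': "eval_F (expd' fs) M = (\<Prod>(i,j) \<leftarrow> fs. M i j * M (Suc i) (Suc j)) - (\<Prod>(i,j) \<leftarrow> fs. M i (Suc j) * M (Suc i) j)"
proof (induction fs rule: expd'.induct)
  case 1 then show ?case by (simp add: eval_F_def)
next
  case (2 i j fs)
  show ?case
    by (simp add: 2 eval_F_append eval_F_prefix[where pre = "ma i j", simplified]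
        eval_F_prefix[where pre = "[mD i j]", simplified] minor_ma minor_mD eval_expd algebra_simps)
qed

lemma expd_minors: "(c, ms) \<in> set (expd fs) \<Longrightarrow> rc \<in> set ms \<Longrightarrow> \<exists>(i,j)\<in>set fs. rc \<in> set (ma i j) \<or> rc = mD i j"
  by (induction fs arbitrary: c ms rule: expd.induct) fastforce+

lemma expd'_minors: "(c, ms) \<in> set (expd' fs) \<Longrightarrow> rc \<in> set ms \<Longrightarrow> \<exists>(i,j)\<in>set fs. rc \<in> set (ma i j) \<or> rc = mD i j"
  by (induction fs arbitrary: c ms rule: expd'.induct) (fastforce dest: expd_minors)+

definition xpow :: "nat \<Rightarrow> (nat \<Rightarrow> nat \<Rightarrow> nat) \<Rightarrow> (nat \<Rightarrow> nat \<Rightarrow> real) \<Rightarrow> real" where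
  "xpow n e M = (\<Prod>i\<in>{1..n}. \<Prod>j\<in>{1..n}. M i j ^ e i j)"

lemma xpow_mult: "xpow n e1 M * xpow n e2 M = xpow n (\<lambda>i j. e1 i j + e2 i j) M"
  unfolding xpow_def by (simp add: prod.distrib[symmetric] power_add)

lemma xpow_cong: "(\<And>i j. i \<in> {1..n} \<Longrightarrow> j \<in> {1..n} \<Longrightarrow> e1 i j = e2 i j) \<Longrightarrow> xpow n e1 M = xpow n e2 M"
  unfolding xpow_def by (intro prod.cong refl) auto

lemma xmono_xpow:
  assumes "\<And>i j. i \<in> {1..n} \<Longrightarrow> j \<in> {1..n} \<Longrightarrow> A i j < 0 \<Longrightarrow> M i j \<noteq> 0"
  shows "xmono n A M * xpow n (\<lambda>i j. nat (- A i j)) M = xpow n (\<lambda>i j. nat (A i j)) M"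
  unfolding xmono_def xpow_def prod.distrib[symmetric]
proof (intro prod.cong refl)
  fix i j assume i: "i \<in> {1..n}" and j: "j \<in> {1..n}"
  show "M i j powi A i j * M i j ^ nat (- A i j) = M i j ^ nat (A i j)"
  proof (cases "A i j < 0")
    case True
    then have ne: "M i j \<noteq> 0" using assms i j by auto
    have "M i j powi A i j * M i j ^ nat (- A i j) = M i j powi A i j * M i j powi (- A i j)"
      using True by (simp add: power_int_def)
    also have "\<dots> = 1" using ne by (simp add: power_int_minus field_simps)
    finally show ?thesis using True by simp
  next
    case False
    then show ?thesis by (simp add: power_int_def)
  qed
qed

lemma prod_pos_conv:
  assumes I: "finite I" and u: "\<And>x. x \<in> I \<Longrightarrow> u x \<in> {1..n} \<times> {1..n}"
  shows "(\<Prod>x\<in>I. M (fst (u x)) (snd (u x)) ^ c x) = xpow n (\<lambda>p q. \<Sum>x\<in>I. if u x = (p,q) then c x else 0) M"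
proof -
  have "xpow n (\<lambda>p q. \<Sum>x\<in>I. if u x = (p,q) then c x else 0) M =
      (\<Prod>p\<in>{1..n}. \<Prod>q\<in>{1..n}. \<Prod>x\<in>I. M p q ^ (if u x = (p,q) then c x else 0))"
    unfolding xpow_def by (simp add: power_sum)
  also have "\<dots> = (\<Prod>x\<in>I. \<Prod>p\<in>{1..n}. \<Prod>q\<in>{1..n}. M p q ^ (if u x = (p,q) then c x else 0))"
    by (subst prod.swap) (subst (2) prod.swap, rule refl)
  also have "\<dots> = (\<Prod>x\<in>I. M (fst (u x)) (snd (u x)) ^ c x)"
  proof (intro prod.cong refl)
    fix x assume x: "x \<in> I"
    obtain a b where ab: "u x = (a,b)" by (cases "u x")
    have a: "a \<in> {1..n}" and b: "b \<in> {1..n}" using u[OF x] ab by auto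
    have "(\<Prod>p\<in>{1..n}. \<Prod>q\<in>{1..n}. M p q ^ (if u x = (p,q) then c x else 0)) =
          (\<Prod>p\<in>{1..n}. \<Prod>q\<in>{1..n}. if p = a then (if q = b then M a b ^ c x else 1) else 1)"
      by (intro prod.cong refl) (auto simp: ab)
    also have "\<dots> = (\<Prod>p\<in>{1..n}. if p = a then M a b ^ c x else 1)"
    proof (intro prod.cong refl)
      fix p assume "p \<in> {1..n}"
      show "(\<Prod>q\<in>{1..n}. if p = a then (if q = b then M a b ^ c x else 1) else 1) = (if p = a then M a b ^ c x else 1)"
        using b by (cases "p = a") auto
    qed
    also have "\<dots> = M a b ^ c x" using a by simp
    finally show "(\<Prod>p\<in>{1..n}. \<Prod>q\<in>{1..n}. M p q ^ (if u x = (p,q) then c x else 0)) = M (fst (u x)) (snd (u x)) ^ c x"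
      by (simp add: ab)
  qed
  finally show ?thesis by simp
qed

lemma prod_list_fl:
  "prod_list (map \<phi> (concat (map (\<lambda>i. concat (map (\<lambda>j. replicate (d (i,j)) (i,j)) [1..<n])) [1..<n])))
   = (\<Prod>x\<in>{1..<n} \<times> {1..<n}. (\<phi> x :: real) ^ d x)"
  by (simp add: map_concat prod_list_concat_gen comp_def prod_list_upt prod.cartesian_product)

lemma set_fl: "x \<in> set (concat (map (\<lambda>i. concat (map (\<lambda>j. replicate (d (i,j)) (i,j)) [1..<n])) [1..<n]))
   \<Longrightarrow> x \<in> {1..<n} \<times> {1..<n}"
  by auto

lemma prod_list_grid:
  "prod_list (map \<phi> (concat (map (\<lambda>p. concat (map (\<lambda>q. replicate (e p q) (f p q)) [1..<Suc n])) [1..<Suc n])))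
   = (\<Prod>p\<in>{1..n}. \<Prod>q\<in>{1..n}. (\<phi> (f p q) :: real) ^ e p q)"
  by (simp add: map_concat prod_list_concat_gen comp_def prod_list_upt atLeastLessThanSuc_atLeastAtMost del: upt_Suc)

lemma prod_list_grid2:
  "prod_list (map \<phi> (concat (map (\<lambda>p. map (\<lambda>q. f p q) [1..<Suc n]) [1..<Suc n])))
   = (\<Prod>p\<in>{1..n}. \<Prod>q\<in>{1..n}. (\<phi> (f p q) :: real))"
  by (simp add: map_concat prod_list_concat_gen comp_def prod_list_upt atLeastLessThanSuc_atLeastAtMost del: upt_Suc)

definition r1 :: "((nat \<times> nat) \<Rightarrow> nat) \<Rightarrow> nat \<Rightarrow> nat \<Rightarrow> nat \<Rightarrow> nat" where
  "r1 d n p q = (\<Sum>x\<in>{1..<n} \<times> {1..<n}. if x = (p,q) then d x else 0) +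
     (\<Sum>x\<in>{1..<n} \<times> {1..<n}. if (Suc (fst x), Suc (snd x)) = (p,q) then d x else 0)"

definition r2 :: "((nat \<times> nat) \<Rightarrow> nat) \<Rightarrow> nat \<Rightarrow> nat \<Rightarrow> nat \<Rightarrow> nat" where
  "r2 d n p q = (\<Sum>x\<in>{1..<n} \<times> {1..<n}. if (fst x, Suc (snd x)) = (p,q) then d x else 0) +
     (\<Sum>x\<in>{1..<n} \<times> {1..<n}. if (Suc (fst x), snd x) = (p,q) then d x else 0)"

lemma R1_xpow: "(\<Prod>x\<in>{1..<n} \<times> {1..<n}. (M (fst x) (snd x) * M (Suc (fst x)) (Suc (snd x))) ^ d x) = xpow n (r1 d n) M"
proof -
  have "(\<Prod>x\<in>{1..<n} \<times> {1..<n}. (M (fst x) (snd x) * M (Suc (fst x)) (Suc (snd x))) ^ d x) =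
     (\<Prod>x\<in>{1..<n} \<times> {1..<n}. M (fst ((\<lambda>x. x) x)) (snd ((\<lambda>x. x) x)) ^ d x) *
     (\<Prod>x\<in>{1..<n} \<times> {1..<n}. M (fst ((\<lambda>x. (Suc (fst x), Suc (snd x))) x)) (snd ((\<lambda>x. (Suc (fst x), Suc (snd x))) x)) ^ d x)"
    by (simp add: power_mult_distrib prod.distrib)
  also have "\<dots> = xpow n (r1 d n) M"
  proof -
    have c1: "(\<Prod>x\<in>{1..<n} \<times> {1..<n}. M (fst ((\<lambda>x. x) x)) (snd ((\<lambda>x. x) x)) ^ d x) =
       xpow n (\<lambda>p q. \<Sum>x\<in>{1..<n} \<times> {1..<n}. if (\<lambda>x. x) x = (p,q) then d x else 0) M"
      by (rule prod_pos_conv) auto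
    have c2: "(\<Prod>x\<in>{1..<n} \<times> {1..<n}. M (fst ((\<lambda>x. (Suc (fst x), Suc (snd x))) x)) (snd ((\<lambda>x. (Suc (fst x), Suc (snd x))) x)) ^ d x) =
       xpow n (\<lambda>p q. \<Sum>x\<in>{1..<n} \<times> {1..<n}. if (\<lambda>x. (Suc (fst x), Suc (snd x))) x = (p,q) then d x else 0) M"
      by (rule prod_pos_conv) auto
    show ?thesis unfolding c1 c2 xpow_mult r1_def[abs_def] by (rule refl)
  qed
  finally show ?thesis .
qed

lemma R2_xpow: "(\<Prod>x\<in>{1..<n} \<times> {1..<n}. (M (fst x) (Suc (snd x)) * M (Suc (fst x)) (snd x)) ^ d x) = xpow n (r2 d n) M"
proof -
  have "(\<Prod>x\<in>{1..<n} \<times> {1..<n}. (M (fst x) (Suc (snd x)) * M (Suc (fst x)) (snd x)) ^ d x) =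
     (\<Prod>x\<in>{1..<n} \<times> {1..<n}. M (fst ((\<lambda>x. (fst x, Suc (snd x))) x)) (snd ((\<lambda>x. (fst x, Suc (snd x))) x)) ^ d x) *
     (\<Prod>x\<in>{1..<n} \<times> {1..<n}. M (fst ((\<lambda>x. (Suc (fst x), snd x)) x)) (snd ((\<lambda>x. (Suc (fst x), snd x)) x)) ^ d x)"
    by (simp add: power_mult_distrib prod.distrib)
  also have "\<dots> = xpow n (r2 d n) M"
  proof -
    have c1: "(\<Prod>x\<in>{1..<n} \<times> {1..<n}. M (fst ((\<lambda>x. (fst x, Suc (snd x))) x)) (snd ((\<lambda>x. (fst x, Suc (snd x))) x)) ^ d x) =
       xpow n (\<lambda>p q. \<Sum>x\<in>{1..<n} \<times> {1..<n}. if (\<lambda>x. (fst x, Suc (snd x))) x = (p,q) then d x else 0) M"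
      by (rule prod_pos_conv) auto
    have c2: "(\<Prod>x\<in>{1..<n} \<times> {1..<n}. M (fst ((\<lambda>x. (Suc (fst x), snd x)) x)) (snd ((\<lambda>x. (Suc (fst x), snd x)) x)) ^ d x) =
       xpow n (\<lambda>p q. \<Sum>x\<in>{1..<n} \<times> {1..<n}. if (\<lambda>x. (Suc (fst x), snd x)) x = (p,q) then d x else 0) M"
      by (rule prod_pos_conv) auto
    show ?thesis unfolding c1 c2 xpow_mult r2_def[abs_def] by (rule refl)
  qed
  finally show ?thesis .
qed

lemma sum_prod_conv:
  fixes f :: "nat \<Rightarrow> nat \<Rightarrow> real"
  shows "(\<Sum>i=1..n-1. \<Sum>j=1..n-1. f i j) = (\<Sum>x\<in>{1..<n}\<times>{1..<n}. f (fst x) (snd x))"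
proof -
  have e: "{1..<n} = {1..n-1}" by auto
  show ?thesis unfolding e by (simp add: sum.cartesian_product split_def)
qed

lemma exp_id:
  assumes A: "is_ASM n A" and B: "is_ASM n B" and le: "asm_le n A B"
    and p: "p \<in> {1..n}" and q: "q \<in> {1..n}"
  shows "int (r1 (\<lambda>x. nat (corner_sum A (fst x) (snd x) - corner_sum B (fst x) (snd x))) n p q)
       - int (r2 (\<lambda>x. nat (corner_sum A (fst x) (snd x) - corner_sum B (fst x) (snd x))) n p q) = A p q - B p q"
proof -
  define dd where "dd x = nat (corner_sum A (fst x) (snd x) - corner_sum B (fst x) (snd x))" for x
  define D where "D i j = corner_sum A i j - corner_sum B i j" for i j
  define L where "L p' q' = (if p' = p \<and> q' = q then 1 else (0::real))" for p' q'
  have inner: "(\<Sum>q'=1..n. real_of_int (A p' q' - B p' q') * L p' q') = (if p' = p then real_of_int (A p q - B p q) else 0)" for p'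
  proof -
    have "(\<Sum>q'=1..n. real_of_int (A p' q' - B p' q') * L p' q') =
       (\<Sum>q'=1..n. if q' = q then (if p' = p then real_of_int (A p q - B p q) else 0) else 0)"
      by (intro sum.cong refl) (auto simp: L_def)
    then show ?thesis using q by simp
  qed
  have lhs: "(\<Sum>p'=1..n. \<Sum>q'=1..n. real_of_int (A p' q' - B p' q') * L p' q') = real_of_int (A p q - B p q)"
    unfolding inner using p by simp
  have Dnn: "D i j \<ge> 0" if "i \<in> {1..<n}" "j \<in> {1..<n}" for i j
    using le that unfolding asm_le_def D_def by auto
  have ddr: "real (dd (a,b)) = real_of_int (D a b)" if "a \<in> {1..<n}" "b \<in> {1..<n}" for a b
    using Dnn[OF that] by (simp add: dd_def D_def)
  have r1r: "real (r1 dd n p q) = (\<Sum>x\<in>{1..<n}\<times>{1..<n}. real_of_int (D (fst x) (snd x)) * (L (fst x) (snd x) + L (Suc (fst x)) (Suc (snd x))))"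
    unfolding r1_def of_nat_add of_nat_sum sum.distrib[symmetric]
    by (intro sum.cong refl) (auto simp: L_def ddr)
  have r2r: "real (r2 dd n p q) = (\<Sum>x\<in>{1..<n}\<times>{1..<n}. real_of_int (D (fst x) (snd x)) * (L (fst x) (Suc (snd x)) + L (Suc (fst x)) (snd x)))"
    unfolding r2_def of_nat_add of_nat_sum sum.distrib[symmetric]
    by (intro sum.cong refl) (auto simp: L_def ddr)
  have "real_of_int (A p q - B p q) = (\<Sum>i=1..n-1. \<Sum>j=1..n-1. real_of_int (D i j) *
        (L i j - L (Suc i) j - L i (Suc j) + L (Suc i) (Suc j)))"
    using sbp_asm[OF A B, of L] lhs unfolding D_def by simp
  also have "\<dots> = real (r1 dd n p q) - real (r2 dd n p q)"
    unfolding r1r r2r sum_prod_conv sum_subtractf[symmetric] by (intro sum.cong refl) (simp add: algebra_simps)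
  finally have "real_of_int (A p q - B p q) = real_of_int (int (r1 dd n p q) - int (r2 dd n p q))" by simp
  then show ?thesis unfolding dd_def by linarith
qed

definition wq :: "nat \<Rightarrow> nat \<Rightarrow> real" where
  "wq p q = real_of_int ((int p - int q)^2) / 2"

definition idm :: "nat \<Rightarrow> nat \<Rightarrow> int" where
  "idm p q = (if p = q then 1 else 0)"

lemma idm_ASM: "is_ASM n idm"
  unfolding is_ASM_def idm_def by (auto simp: sum.delta')

lemma corner_idm: "corner_sum idm i j = int (min i j)"
proof -
  have "corner_sum idm i j = (\<Sum>p=1..i. if p \<le> j then 1 else 0)"
    unfolding corner_sum_def idm_def by (intro sum.cong refl) (auto simp: sum.delta')
  also have "\<dots> = int (min i j)"
    by (induction i) (auto simp: min_def)
  finally show ?thesis .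
qed

lemma corner_le_row: assumes A: "is_ASM n A" and "i \<le> n" "j \<in> {1..n}" shows "corner_sum A i j \<le> int i"
proof -
  have "corner_sum A i j \<le> (\<Sum>p=1..i. 1)" unfolding corner_sum_def
  proof (intro sum_mono)
    fix p assume "p \<in> {1..i}"
    then have "p \<in> {1..n}" using assms by auto
    then have "(\<Sum>q=1..j. A p q) \<in> {0,1}" using A assms(3) unfolding is_ASM_def by blast
    then show "(\<Sum>q=1..j. A p q) \<le> 1" by auto
  qed
  then show ?thesis by simp
qed

lemma corner_le_col: assumes A: "is_ASM n A" and "i \<in> {1..n}" "j \<le> n" shows "corner_sum A i j \<le> int j"
proof -
  have "corner_sum A i j = (\<Sum>q=1..j. \<Sum>p=1..i. A p q)" unfolding corner_sum_def by (rule sum.swap)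
  also have "\<dots> \<le> (\<Sum>q=1..j. 1)"
  proof (intro sum_mono)
    fix q assume "q \<in> {1..j}"
    then have "q \<in> {1..n}" using assms by auto
    then have "(\<Sum>p=1..i. A p q) \<in> {0,1}" using A assms(2) unfolding is_ASM_def by blast
    then show "(\<Sum>p=1..i. A p q) \<le> 1" by auto
  qed
  finally show ?thesis by simp
qed

lemma qweight:
  assumes A: "is_ASM n A"
  shows "\<exists>k::nat. (\<Sum>p=1..n. \<Sum>q=1..n. real_of_int (A p q) * wq p q) = real k"
proof -
  have mix: "wq i j - wq (Suc i) j - wq i (Suc j) + wq (Suc i) (Suc j) = -1" for i j
    unfolding wq_def by (simp add: power2_eq_square field_simps)
  have z: "(\<Sum>p=1..n. \<Sum>q=1..n. real_of_int (idm p q) * wq p q) = 0"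
    by (intro sum.neutral ballI) (simp add: idm_def wq_def)
  have "(\<Sum>p=1..n. \<Sum>q=1..n. real_of_int (A p q - idm p q) * wq p q) =
      (\<Sum>i=1..n-1. \<Sum>j=1..n-1. real_of_int (corner_sum A i j - corner_sum idm i j) * (-1))"
    using sbp_asm[OF A idm_ASM, of wq] by (simp add: mix)
  also have "\<dots> = real_of_int (\<Sum>i=1..n-1. \<Sum>j=1..n-1. corner_sum idm i j - corner_sum A i j)"
    by (simp add: of_int_sum sum_negf[symmetric])
  finally have e: "(\<Sum>p=1..n. \<Sum>q=1..n. real_of_int (A p q) * wq p q) =
      real_of_int (\<Sum>i=1..n-1. \<Sum>j=1..n-1. corner_sum idm i j - corner_sum A i j)"
    using z by (simp add: left_diff_distrib sum_subtractf)
  have "(\<Sum>i=1..n-1. \<Sum>j=1..n-1. corner_sum idm i j - corner_sum A i j) \<ge> 0"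
  proof (intro sum_nonneg)
    fix i j assume i: "i \<in> {1..n-1}" and j: "j \<in> {1..n-1}"
    show "0 \<le> corner_sum idm i j - corner_sum A i j"
      using corner_le_row[OF A, of i j] corner_le_col[OF A, of i j] i j by (auto simp: corner_idm min_def)
  qed
  then show ?thesis using e by (intro exI[of _ "nat (\<Sum>i=1..n-1. \<Sum>j=1..n-1. corner_sum idm i j - corner_sum A i j)"]) simp
qed

lemma powr_powi: "(q::real) > 0 \<Longrightarrow> (q powr w) powi a = q powr (w * real_of_int a)"
  by (simp add: powr_real_of_int'[symmetric] powr_powr)

lemma xmono_qmat:
  assumes q: "q > 0" and k: "(\<Sum>p=1..n. \<Sum>r=1..n. real_of_int (A p r) * wq p r) = real k"
  shows "xmono n A (qmat q M) = q ^ k * xmono n A M"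
proof -
  have "xmono n A (qmat q M) = (\<Prod>i=1..n. \<Prod>j=1..n. q powr (real_of_int (A i j) * wq i j)) * xmono n A M"
    unfolding xmono_def qmat_def prod.distrib[symmetric] power_int_mult_distrib
    by (intro prod.cong refl) (simp add: powr_powi q wq_def mult.commute)
  also have "(\<Prod>i=1..n. \<Prod>j=1..n. q powr (real_of_int (A i j) * wq i j)) = q powr (\<Sum>i=1..n. \<Sum>j=1..n. real_of_int (A i j) * wq i j)"
    using q by (simp add: powr_sum)
  also have "\<dots> = q ^ k" using q k by (simp add: powr_realpow)
  finally show ?thesis .
qed

lemma xpow_ne0: "xpow n e M \<noteq> 0 \<Longrightarrow> i \<in> {1..n} \<Longrightarrow> j \<in> {1..n} \<Longrightarrow> e i j > 0 \<Longrightarrow> M i j \<noteq> 0"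
  unfolding xpow_def by (auto simp: prod_zero_iff)

lemma poly_fun_comb: "poly_fun n (\<lambda>M. a * xpow n e1 M + b * xpow n e2 M)"
  unfolding poly_fun_def
proof (intro exI conjI allI)
  show "finite {e1, e2}" by simp
  fix M
  show "a * xpow n e1 M + b * xpow n e2 M =
     (\<Sum>e\<in>{e1, e2}. ((if e = e1 then a else 0) + (if e = e2 then b else 0)) * (\<Prod>i\<in>{1..n}. \<Prod>j\<in>{1..n}. M i j ^ e i j))"
    by (cases "e1 = e2") (auto simp: xpow_def algebra_simps)
qed

lemma prod_list_pos_gen: "(\<And>x. x \<in> set xs \<Longrightarrow> f x > (0::real)) \<Longrightarrow> prod_list (map f xs) > 0"
  by (induction xs) (auto intro!: mult_pos_pos)

lemma eval_G_pos_minor: "(\<And>rc d. (rc, d) \<in> set Gs \<Longrightarrow> minor M rc > 0) \<Longrightarrow> eval_G Gs M > 0"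
  unfolding eval_G_def by (rule prod_list_pos_gen) (auto split: prod.splits)

lemma eval_F_nonneg_minor: "(\<And>c ms rc. (c, ms) \<in> set Fs \<Longrightarrow> rc \<in> set ms \<Longrightarrow> minor M rc > 0) \<Longrightarrow> eval_F Fs M \<ge> 0"
proof (induction Fs)
  case Nil then show ?case by (simp add: eval_F_def)
next
  case (Cons a Fs)
  obtain c ms where a: "a = (c, ms)" by (cases a)
  have "(\<Prod>rc\<leftarrow>ms. minor M rc) \<ge> 0"
    using Cons.prems[of c ms] unfolding a by (intro less_imp_le prod_list_pos_gen) auto
  moreover have "eval_F Fs M \<ge> 0" using Cons by auto
  ultimately show ?case by (simp add: a eval_F_def)
qed

lemma le_imp_qSFL:
  assumes A: "is_ASM n A" and B: "is_ASM n B" and le: "asm_le n A B"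
  shows "qSFL n (\<lambda>M. xmono_dom n A M \<and> xmono_dom n B M) (\<lambda>M. xmono n A M - xmono n B M)"
proof -
  define dd where "dd x = nat (corner_sum A (fst x) (snd x) - corner_sum B (fst x) (snd x))" for x
  define fl where "fl = concat (map (\<lambda>i. concat (map (\<lambda>j. replicate (dd (i,j)) (i,j)) [1..<n])) [1..<n])"
  define eP where "eP p q = nat (B p q) + nat (- A p q)" for p q
  define pre where "pre = concat (map (\<lambda>p. concat (map (\<lambda>q. replicate (eP p q) ([p],[q])) [1..<Suc n])) [1..<Suc n])"
  define Fs where "Fs = map (\<lambda>(c, ms). (c, pre @ ms)) (expd' fl)"
  define eG where "eG p q = nat (- A p q) + nat (- B p q) + r2 dd n p q" for p q
  define Gs where "Gs = concat (map (\<lambda>p. map (\<lambda>q. (([p],[q]), eG p q)) [1..<Suc n]) [1..<Suc n])"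
  define Am where "Am p q = nat (- A p q)" for p q
  define Bm where "Bm p q = nat (- B p q)" for p q
  define Ap where "Ap p q = nat (A p q)" for p q
  define Bp where "Bp p q = nat (B p q)" for p q
  let ?D = "\<lambda>M. xmono_dom n A M \<and> xmono_dom n B M"
  let ?g = "\<lambda>M. xmono n A M - xmono n B M"
  have pre_eval: "(\<Prod>rc \<leftarrow> pre. minor M rc) = xpow n eP M" for M
    unfolding pre_def xpow_def prod_list_grid by (simp add: minor1)
  have G_eval: "eval_G Gs M = xpow n eG M" for M
    unfolding eval_G_def Gs_def xpow_def prod_list_grid2 by (simp add: minor1)
  have fl_a: "(\<Prod>(i,j)\<leftarrow>fl. M i (Suc j) * M (Suc i) j) = xpow n (r2 dd n) M" for M
    unfolding fl_def prod_list_fl R2_xpow[symmetric] by (simp add: split_def)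
  have fl_b: "(\<Prod>(i,j)\<leftarrow>fl. M i j * M (Suc i) (Suc j)) = xpow n (r1 dd n) M" for M
    unfolding fl_def prod_list_fl R1_xpow[symmetric] by (simp add: split_def)
  have F_eval: "eval_F Fs M = xpow n eP M * (xpow n (r1 dd n) M - xpow n (r2 dd n) M)" for M
    unfolding Fs_def eval_F_prefix pre_eval eval_expd' fl_a fl_b ..
  have expo: "Ap p q + Bm p q + r2 dd n p q = eP p q + r1 dd n p q" if "p \<in> {1..n}" "q \<in> {1..n}" for p q
  proof -
    have "int (r1 dd n p q) - int (r2 dd n p q) = A p q - B p q"
      using exp_id[OF A B le that] unfolding dd_def[abs_def] .
    then show ?thesis unfolding Ap_def Bm_def eP_def by linarith
  qed
  have ident: "?g M * eval_G Gs M = eval_F Fs M" if D: "?D M" for M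
  proof -
    have xa: "xmono n A M * xpow n Am M = xpow n Ap M"
      unfolding Am_def Ap_def by (rule xmono_xpow) (use D in \<open>auto simp: xmono_dom_def\<close>)
    have xb: "xmono n B M * xpow n Bm M = xpow n Bp M"
      unfolding Bm_def Bp_def by (rule xmono_xpow) (use D in \<open>auto simp: xmono_dom_def\<close>)
    have Gs: "xpow n eG M = xpow n Am M * xpow n Bm M * xpow n (r2 dd n) M"
      unfolding xpow_mult by (rule xpow_cong) (simp add: eG_def Am_def Bm_def)
    have e1: "xpow n Ap M * xpow n Bm M * xpow n (r2 dd n) M = xpow n eP M * xpow n (r1 dd n) M"
      unfolding xpow_mult by (rule xpow_cong) (use expo in auto)
    have e2: "xpow n Bp M * xpow n Am M * xpow n (r2 dd n) M = xpow n eP M * xpow n (r2 dd n) M"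
      unfolding xpow_mult by (rule xpow_cong) (simp add: Bp_def Am_def eP_def)
    have "?g M * eval_G Gs M = (xmono n A M * xpow n Am M) * xpow n Bm M * xpow n (r2 dd n) M
        - (xmono n B M * xpow n Bm M) * xpow n Am M * xpow n (r2 dd n) M"
      unfolding G_eval Gs by (simp add: algebra_simps)
    also have "\<dots> = xpow n eP M * xpow n (r1 dd n) M - xpow n eP M * xpow n (r2 dd n) M"
      unfolding xa xb e1 e2 ..
    also have "\<dots> = eval_F Fs M" unfolding F_eval by (simp add: algebra_simps)
    finally show ?thesis .
  qed
  have valid1: "minor_idx n ([p],[q])" if "p \<in> {1..n}" "q \<in> {1..n}" for p q
    using that by (auto simp: minor_idx_def)
  have validF: "\<forall>(c, ms) \<in> set Fs. \<forall>rc \<in> set ms. minor_idx n rc"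
  proof (intro ballI, clarify)
    fix c ms rc assume cms: "(c, ms) \<in> set Fs" and rc: "rc \<in> set ms"
    obtain ms' where ms: "ms = pre @ ms'" and cms': "(c, ms') \<in> set (expd' fl)"
      using cms unfolding Fs_def by auto
    show "minor_idx n rc"
    proof (cases "rc \<in> set pre")
      case True
      then show ?thesis unfolding pre_def by (auto intro!: valid1 split: if_splits)
    next
      case False
      then have "rc \<in> set ms'" using rc ms by auto
      from expd'_minors[OF cms' this] obtain i j where ij: "(i,j) \<in> set fl"
        and r: "rc \<in> set (ma i j) \<or> rc = mD i j" by blast
      have "(i,j) \<in> {1..<n} \<times> {1..<n}" using ij unfolding fl_def by (rule set_fl)
      then show ?thesis using r by (auto simp: ma_def mD_def minor_idx_def)
    qed
  qed
  have validG: "\<forall>(rc, d) \<in> set Gs. minor_idx n rc"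
    unfolding Gs_def by (auto intro!: valid1)
  obtain kA where kA: "(\<Sum>p=1..n. \<Sum>r=1..n. real_of_int (A p r) * wq p r) = real kA" using qweight[OF A] by blast
  obtain kB where kB: "(\<Sum>p=1..n. \<Sum>r=1..n. real_of_int (B p r) * wq p r) = real kB" using qweight[OF B] by blast
  define N where "N = max kA kB"
  define P where "P k M = (if k = kA then 1 else 0) * xpow n (\<lambda>p q. Ap p q + Bm p q) M +
      (- (if k = kB then 1 else 0)) * xpow n (\<lambda>p q. Bp p q + Am p q) M" for k M
  define Q where "Q k M = 1 * xpow n (\<lambda>p q. Am p q + Bm p q) M + 0 * xpow n (\<lambda>p q. Am p q + Bm p q) M" for k :: nat and M
  have polyP: "poly_fun n (P k)" for k unfolding P_def by (rule poly_fun_comb)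
  have polyQ: "poly_fun n (Q k)" for k unfolding Q_def by (rule poly_fun_comb)
  have Qne: "\<exists>M. Q k M \<noteq> 0" for k
    by (rule exI[of _ "\<lambda>_ _. 1"]) (simp add: Q_def xpow_def)
  have qeq: "eval_F Fs (qmat q M) / eval_G Gs (qmat q M) = (\<Sum>k\<le>N. P k M / Q k M * q ^ k)"
    if q: "q > 0" and Gne: "eval_G Gs (qmat q M) \<noteq> 0" and Qn: "\<forall>k\<le>N. Q k M \<noteq> 0" for q M
  proof -
    have Gne': "xpow n eG (qmat q M) \<noteq> 0" using Gne G_eval by simp
    have Dq: "?D (qmat q M)"
      unfolding xmono_dom_def
    proof (intro conjI ballI impI)
      fix i j assume "i \<in> {1..n}" "j \<in> {1..n}" "A i j < 0"
      then show "qmat q M i j \<noteq> 0" using xpow_ne0[OF Gne'] by (auto simp: eG_def)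
    next
      fix i j assume "i \<in> {1..n}" "j \<in> {1..n}" "B i j < 0"
      then show "qmat q M i j \<noteq> 0" using xpow_ne0[OF Gne'] by (auto simp: eG_def)
    qed
    have "eval_F Fs (qmat q M) / eval_G Gs (qmat q M) = ?g (qmat q M)"
      using ident[OF Dq] Gne by (simp add: field_simps)
    also have "\<dots> = q ^ kA * xmono n A M - q ^ kB * xmono n B M"
      using xmono_qmat[OF q kA] xmono_qmat[OF q kB] by simp
    finally have lhs: "eval_F Fs (qmat q M) / eval_G Gs (qmat q M) = q ^ kA * xmono n A M - q ^ kB * xmono n B M" .
    define Qv where "Qv = xpow n (\<lambda>p q. Am p q + Bm p q) M"
    have Qv: "Qv \<noteq> 0" using Qn[rule_format, of 0] by (simp add: Q_def Qv_def)
    have DM: "?D M"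
      unfolding xmono_dom_def
    proof (intro conjI ballI impI)
      fix i j assume "i \<in> {1..n}" "j \<in> {1..n}" "A i j < 0"
      then show "M i j \<noteq> 0" using xpow_ne0[OF Qv[unfolded Qv_def]] by (auto simp: Am_def)
    next
      fix i j assume "i \<in> {1..n}" "j \<in> {1..n}" "B i j < 0"
      then show "M i j \<noteq> 0" using xpow_ne0[OF Qv[unfolded Qv_def]] by (auto simp: Bm_def)
    qed
    have xa: "xmono n A M * xpow n Am M = xpow n Ap M"
      unfolding Am_def Ap_def by (rule xmono_xpow) (use DM in \<open>auto simp: xmono_dom_def\<close>)
    have xb: "xmono n B M * xpow n Bm M = xpow n Bp M"
      unfolding Bm_def Bp_def by (rule xmono_xpow) (use DM in \<open>auto simp: xmono_dom_def\<close>)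
    have QvE: "Qv = xpow n Am M * xpow n Bm M" unfolding Qv_def xpow_mult ..
    have alA: "xmono n A M = xpow n (\<lambda>p q. Ap p q + Bm p q) M / Qv"
    proof -
      have "xmono n A M * Qv = xpow n (\<lambda>p q. Ap p q + Bm p q) M"
        unfolding QvE xpow_mult[symmetric] using xa by (simp add: algebra_simps)
      then show ?thesis using Qv by (simp add: field_simps)
    qed
    have alB: "xmono n B M = xpow n (\<lambda>p q. Bp p q + Am p q) M / Qv"
    proof -
      have "xmono n B M * Qv = xpow n (\<lambda>p q. Bp p q + Am p q) M"
        unfolding QvE xpow_mult[symmetric] using xb by (simp add: algebra_simps)
      then show ?thesis using Qv by (simp add: field_simps)
    qed
    have "(\<Sum>k\<le>N. P k M / Q k M * q ^ k) =
       (\<Sum>k\<le>N. (if k = kA then xpow n (\<lambda>p q. Ap p q + Bm p q) M / Qv * q ^ kA else 0)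
              - (if k = kB then xpow n (\<lambda>p q. Bp p q + Am p q) M / Qv * q ^ kB else 0))"
      by (intro sum.cong refl) (auto simp: P_def Q_def Qv_def diff_divide_distrib left_diff_distrib)
    also have "\<dots> = xpow n (\<lambda>p q. Ap p q + Bm p q) M / Qv * q ^ kA - xpow n (\<lambda>p q. Bp p q + Am p q) M / Qv * q ^ kB"
      by (simp add: sum_subtractf N_def)
    finally show ?thesis unfolding lhs alA alB by (simp add: mult.commute)
  qed
  show ?thesis
    unfolding qSFL_def
    apply (rule exI[of _ Fs], rule exI[of _ Gs])
    apply (intro conjI)
       apply (rule validF)
      apply (rule validG)
     apply (use ident in blast)
    apply (rule exI[of _ N], rule exI[of _ P], rule exI[of _ Q])
    using polyP polyQ Qne qeq by blast
qed

lemma le_imp_qTNN: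
  assumes A: "is_ASM n A" and B: "is_ASM n B" and le: "asm_le n A B"
  shows "qTNN n (\<lambda>M. xmono_dom n A M \<and> xmono_dom n B M) (\<lambda>M. xmono n A M - xmono n B M)"
  unfolding qTNN_def locally_TNN_fun_def locally_TNN_mat_def
proof (intro allI impI)
  fix q0 :: real and M assume "q0 > 0" and h: "TNN n (qmat q0 M) \<and> xmono_dom n A (qmat q0 M) \<and> xmono_dom n B (qmat q0 M)"
  define N where "N = qmat q0 M"
  have T: "TNN n N" and dA: "xmono_dom n A N" and dB: "xmono_dom n B N" using h by (auto simp: N_def)
  have "xmono n B N \<le> xmono n A N"
    by (rule main12[OF A B le]) (use T dA dB in \<open>auto simp: TNN_entry TNN_M2 xmono_dom_def\<close>)
  then show "0 \<le> xmono n A (qmat q0 M) - xmono n B (qmat q0 M)" by (simp add: N_def)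
qed

lemma not_le_witness:
  assumes "\<not> asm_le n A B"
  shows "\<exists>N. (\<forall>p\<in>{1..n}. \<forall>q\<in>{1..n}. N p q > 0) \<and> (\<forall>rc. minor_idx n rc \<longrightarrow> minor N rc > 0)
     \<and> xmono n A N < xmono n B N"
proof -
  obtain i j where "i \<in> {1..n}" "j \<in> {1..n}" "corner_sum A i j < corner_sum B i j"
    using assms unfolding asm_le_def by force
  then show ?thesis by (rule witness)
qed

lemma qTNN_imp_le:
  assumes q: "qTNN n (\<lambda>M. xmono_dom n A M \<and> xmono_dom n B M) (\<lambda>M. xmono n A M - xmono n B M)"
  shows "asm_le n A B"
proof (rule ccontr)
  assume "\<not> asm_le n A B"
  then obtain N where pos: "\<forall>p\<in>{1..n}. \<forall>q\<in>{1..n}. N p q > 0" and tp: "\<forall>rc. minor_idx n rc \<longrightarrow> minor N rc > 0"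
    and lt: "xmono n A N < xmono n B N" using not_le_witness by blast
  have q1: "qmat 1 N = N" by (simp add: qmat_def)
  have "TNN n (qmat 1 N)" unfolding q1 TNN_def using tp by (auto intro: less_imp_le)
  moreover have "xmono_dom n A (qmat 1 N) \<and> xmono_dom n B (qmat 1 N)"
  proof -
    have "\<forall>i\<in>{1..n}. \<forall>j\<in>{1..n}. N i j \<noteq> 0" using pos by force
    then show ?thesis unfolding q1 xmono_dom_def by blast
  qed
  ultimately have "0 \<le> xmono n A (qmat 1 N) - xmono n B (qmat 1 N)"
    using q unfolding qTNN_def locally_TNN_fun_def locally_TNN_mat_def by auto
  then show False using lt q1 by simp
qed

lemma qSFL_imp_le:
  assumes q: "qSFL n (\<lambda>M. xmono_dom n A M \<and> xmono_dom n B M) (\<lambda>M. xmono n A M - xmono n B M)"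
  shows "asm_le n A B"
proof (rule ccontr)
  assume "\<not> asm_le n A B"
  then obtain N where pos: "\<forall>p\<in>{1..n}. \<forall>q\<in>{1..n}. N p q > 0" and tp: "\<forall>rc. minor_idx n rc \<longrightarrow> minor N rc > 0"
    and lt: "xmono n A N < xmono n B N" using not_le_witness by blast
  obtain Fs Gs where vF: "\<forall>(c, ms) \<in> set Fs. \<forall>rc \<in> set ms. minor_idx n rc"
    and vG: "\<forall>(rc, d) \<in> set Gs. minor_idx n rc"
    and eq: "\<forall>M. xmono_dom n A M \<and> xmono_dom n B M \<longrightarrow> (xmono n A M - xmono n B M) * eval_G Gs M = eval_F Fs M"
    using q unfolding qSFL_def by blast
  have D: "xmono_dom n A N \<and> xmono_dom n B N"
  proof -
    have "\<forall>i\<in>{1..n}. \<forall>j\<in>{1..n}. N i j \<noteq> 0" using pos by force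
    then show ?thesis unfolding xmono_dom_def by blast
  qed
  have G: "eval_G Gs N > 0" by (rule eval_G_pos_minor) (use vG tp in fastforce)
  have F: "eval_F Fs N \<ge> 0" by (rule eval_F_nonneg_minor) (use vF tp in fastforce)
  have "(xmono n A N - xmono n B N) * eval_G Gs N < 0" using lt G by (simp add: mult_neg_pos)
  then show False using eq D F by auto
qed

theorem theorem5p2:
  fixes n :: nat and A B :: "nat \<Rightarrow> nat \<Rightarrow> int"
  assumes "is_ASM n A" and "is_ASM n B"
  defines "D \<equiv> (\<lambda>M. xmono_dom n A M \<and> xmono_dom n B M)"
      and "g \<equiv> (\<lambda>M. xmono n A M - xmono n B M)"
  shows "(asm_le n A B \<longleftrightarrow> qTNN n D g) \<and> (qTNN n D g \<longleftrightarrow> qSFL n D g)"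
  unfolding D_def g_def
  using le_imp_qTNN[OF assms(1,2)] qTNN_imp_le le_imp_qSFL[OF assms(1,2)] qSFL_imp_le
  by blast

end
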